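(* Assume that $X_1,\dots,X_n$ are independently drawn from a density $f$ which is $1$-subgaussian. Suppose there exists a $k$-component Gaussian location mixture $g=\sum_{i=1}^k w_iN(\mu_i,\sigma^2)$ with a given variance $\sigma^2$ such that $\mathrm{TV}(f,g)\le\epsilon$. Then there exists an estimate $\hat f$ such that, with probability $1-\delta$, \[\mathrm{TV}(\hat f,f)\le O_k\Big(\epsilon\sqrt{\log(1/\epsilon)}+\sqrt{\log(1/\delta)/n}\Big).\]
   Context: A distribution $\pi$ is $s$-subgaussian if $\mathbb{E}_\pi[e^{tX}]\le\exp(t^2s^2/2)$ for all $t\in\mathbb{R}$. $\mathrm{TV}(f,g)=\frac12\|f-g\|_1$. $O_k(\cdot)$ hides a constant depending only on $k$. Standing assumption: $k=O(\log n/\log\log n)$. *)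

theory Defs
  imports "HOL-Probability.Probability"
begin

definition is_density :: "(real \<Rightarrow> real) \<Rightarrow> bool" where
  "is_density h \<longleftrightarrow> h \<in> borel_measurable lborel \<and> (\<forall>x. 0 \<le> h x)
     \<and> integrable lborel h \<and> (\<integral>x. h x \<partial>lborel) = 1"

definition subgaussian :: "real \<Rightarrow> (real \<Rightarrow> real) \<Rightarrow> bool" where
  "subgaussian s h \<longleftrightarrow>
     (\<forall>t::real. (\<integral>\<^sup>+x. ennreal (exp (t * x) * h x) \<partial>lborel) \<le> ennreal (exp (t\<^sup>2 * s\<^sup>2 / 2)))"

definition tv :: "(real \<Rightarrow> real) \<Rightarrow> (real \<Rightarrow> real) \<Rightarrow> real" where
  "tv f g = (1/2) * (\<integral>x. \<bar>f x - g x\<bar> \<partial>lborel)"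

definition gauss_mix :: "nat \<Rightarrow> (nat \<Rightarrow> real) \<Rightarrow> (nat \<Rightarrow> real) \<Rightarrow> real \<Rightarrow> real \<Rightarrow> real" where
  "gauss_mix k w \<mu> \<sigma> x = (\<Sum>i<k. w i * normal_density (\<mu> i) \<sigma> x)"

definition sample_law :: "nat \<Rightarrow> (real \<Rightarrow> real) \<Rightarrow> (nat \<Rightarrow> real) measure" where
  "sample_law n h = PiM {..<n} (\<lambda>_. density lborel h)"

end

theory Submission
  imports Defs
begin

lemma rolle_many:
  fixes f f' :: "real \<Rightarrow> real"
  assumes D: "\<And>x. (f has_real_derivative f' x) (at x)"
  shows "finite Z \<Longrightarrow> card Z = Suc n \<Longrightarrow> (\<forall>z\<in>Z. f z = 0) \<Longrightarrow>
     \<exists>Z'. finite Z' \<and> card Z' = n \<and> Z' \<subseteq> {Min Z<..<Max Z} \<and> (\<forall>z\<in>Z'. f' z = 0)"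
proof (induction n arbitrary: Z)
  case 0
  then show ?case by auto
next
  case (Suc n)
  define M where "M = Max Z"
  define Z0 where "Z0 = Z - {M}"
  have ne: "Z \<noteq> {}" using Suc.prems by auto
  have MZ: "M \<in> Z" unfolding M_def using Suc.prems ne by auto
  have fZ0: "finite Z0" and cZ0: "card Z0 = Suc n" using Suc.prems MZ by (auto simp: Z0_def)
  have ne0: "Z0 \<noteq> {}" using cZ0 by auto
  obtain Z' where Z': "finite Z'" "card Z' = n" "Z' \<subseteq> {Min Z0<..<Max Z0}" "\<forall>z\<in>Z'. f' z = 0"
    using Suc.IH[OF fZ0 cZ0] Suc.prems(3) by (auto simp: Z0_def)
  have m0: "Max Z0 \<in> Z0" using fZ0 ne0 by auto
  have lt: "Max Z0 < M"
    using m0 Suc.prems(1) unfolding Z0_def M_def by (simp add: order.not_eq_order_implies_strict)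
  have fz: "f (Max Z0) = f M" using m0 MZ Suc.prems(3) by (auto simp: Z0_def)
  have cont: "continuous_on {Max Z0..M} f"
    using D by (meson DERIV_isCont continuous_at_imp_continuous_on)
  obtain z where z: "Max Z0 < z" "z < M" "(f has_real_derivative 0) (at z)"
    using Rolle[OF lt fz cont] D by (meson real_differentiable_def)
  have fz0: "f' z = 0" using z(3) D DERIV_unique by blast
  have znot: "z \<notin> Z'" using Z'(3) z(1) by auto
  have minle: "Min Z \<le> Min Z0" using Suc.prems(1) ne0 by (simp add: Z0_def Min_antimono)
  have maxZ0: "Max Z0 \<le> Max Z" using Suc.prems(1) ne0 by (simp add: Z0_def Max_mono)
  have "Min Z \<le> Max Z0" using minle fZ0 ne0 by (meson Min_le_iff Max_ge m0 order_trans)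
  show ?case
    apply (rule exI[of _ "insert z Z'"])
    using Z' znot z fz0 minle maxZ0 \<open>Min Z \<le> Max Z0\<close> by (auto simp: M_def)
qed

lemma exp_sum_zeros:
  fixes c b :: "nat \<Rightarrow> real"
  shows "finite Z \<Longrightarrow> card Z \<ge> m \<Longrightarrow> (\<forall>z\<in>Z. (\<Sum>i<m. c i * exp (b i * z)) = 0)
     \<Longrightarrow> (\<Sum>i<m. c i * exp (b i * x)) = 0"
proof (induction m arbitrary: c b Z x)
  case 0
  then show ?case by simp
next
  case (Suc m)
  define \<psi> where "\<psi> = (\<lambda>x. c 0 + (\<Sum>i<m. c (Suc i) * exp ((b (Suc i) - b 0) * x)))"
  define \<psi>' where "\<psi>' = (\<lambda>x. (\<Sum>i<m. (c (Suc i) * (b (Suc i) - b 0)) * exp ((b (Suc i) - b 0) * x)))"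
  have phi: "(\<Sum>i<Suc m. c i * exp (b i * x)) = exp (b 0 * x) * \<psi> x" for x
    unfolding \<psi>_def sum.lessThan_Suc_shift
    by (simp add: algebra_simps sum_distrib_left exp_diff)
  have D: "(\<psi> has_real_derivative \<psi>' x) (at x)" for x
    unfolding \<psi>_def \<psi>'_def
    by (auto intro!: derivative_eq_intros simp: algebra_simps)
  obtain Z1 where Z1: "Z1 \<subseteq> Z" "card Z1 = Suc m" "finite Z1"
    using Suc.prems(1,2) by (meson obtain_subset_with_card_n finite_subset)
  have zero: "\<forall>z\<in>Z1. \<psi> z = 0" using Suc.prems(3) Z1(1) phi by auto
  obtain Z' where Z': "finite Z'" "card Z' = m" "\<forall>z\<in>Z'. \<psi>' z = 0"
    using rolle_many[OF D Z1(3) Z1(2) zero] by blast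
  have "\<psi>' y = 0" for y
    using Suc.IH[of Z' "\<lambda>i. c (Suc i) * (b (Suc i) - b 0)" "\<lambda>i. b (Suc i) - b 0" y] Z'
    unfolding \<psi>'_def by auto
  hence "\<And>y. (\<psi> has_real_derivative 0) (at y)" using D by metis
  hence const: "\<psi> x = \<psi> y" for y using DERIV_isconst_all by blast
  obtain z where "z \<in> Z1" using Z1(2) by fastforce
  hence "\<psi> z = 0" using zero by auto
  hence "\<psi> x = 0" using const by metis
  thus ?case using phi by simp
qed

lemma nd_split:
  assumes "\<sigma> > 0"
  shows "normal_density m \<sigma> x = exp (-(x\<^sup>2) / (2*\<sigma>\<^sup>2)) *
     ((exp (-(m\<^sup>2) / (2*\<sigma>\<^sup>2)) / sqrt (2*pi*\<sigma>\<^sup>2)) * exp ((m / \<sigma>\<^sup>2) * x))"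
proof -
  have "-(x - m)\<^sup>2 / (2*\<sigma>\<^sup>2) = -(x\<^sup>2) / (2*\<sigma>\<^sup>2) + (-(m\<^sup>2) / (2*\<sigma>\<^sup>2) + (m / \<sigma>\<^sup>2) * x)"
    using assms by (simp add: field_simps power2_eq_square)
  hence "exp (-(x - m)\<^sup>2 / (2*\<sigma>\<^sup>2)) = exp (-(x\<^sup>2) / (2*\<sigma>\<^sup>2)) * (exp (-(m\<^sup>2) / (2*\<sigma>\<^sup>2)) * exp ((m / \<sigma>\<^sup>2) * x))"
    by (simp only: exp_add)
  moreover have "\<And>s E A B::real. 1/s*(E*(A*B)) = E*(A/s*B)" by simp
  ultimately show ?thesis
    unfolding normal_density_def by metis
qed

lemma sum_split_2k:
  fixes f :: "nat \<Rightarrow> real"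
  shows "(\<Sum>i<2*k. f i) = (\<Sum>i<k. f i) + (\<Sum>i<k. f (i + k))"
proof -
  have e: "{..<2*k} = {..<k} \<union> {k..<k+k}" by auto
  have "sum f ({..<k} \<union> {k..<k+k}) = sum f {..<k} + sum f {k..<k+k}"
    by (rule sum.union_disjoint) auto
  also have "(\<Sum>i\<in>{k..<k+k}. f i) = (\<Sum>i<k. f (i + k))"
    using sum.shift_bounds_nat_ivl[of f 0 k k] by (simp add: lessThan_atLeast0)
  finally show ?thesis unfolding e .
qed

lemma gauss_mix_diff_zeros:
  assumes "\<sigma> > 0"
  shows "(\<forall>x. gauss_mix k w \<mu> \<sigma> x = gauss_mix k w' \<mu>' \<sigma> x) \<or>
    (finite {x. gauss_mix k w \<mu> \<sigma> x = gauss_mix k w' \<mu>' \<sigma> x} \<and>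
     card {x. gauss_mix k w \<mu> \<sigma> x = gauss_mix k w' \<mu>' \<sigma> x} < 2*k)"
proof -
  define a where "a = (\<lambda>m. exp (-(m\<^sup>2) / (2*\<sigma>\<^sup>2)) / sqrt (2*pi*\<sigma>\<^sup>2))"
  define c where "c = (\<lambda>i. if i < k then w i * a (\<mu> i) else - (w' (i-k) * a (\<mu>' (i-k))))"
  define b where "b = (\<lambda>i. if i < k then \<mu> i / \<sigma>\<^sup>2 else \<mu>' (i-k) / \<sigma>\<^sup>2)"
  define E where "E = (\<lambda>x::real. exp (-(x\<^sup>2) / (2*\<sigma>\<^sup>2)))"
  have key: "gauss_mix k w \<mu> \<sigma> x - gauss_mix k w' \<mu>' \<sigma> x = E x * (\<Sum>i<2*k. c i * exp (b i * x))" for x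
  proof -
    have "(\<Sum>i<2*k. c i * exp (b i * x)) =
      (\<Sum>i<k. w i * a (\<mu> i) * exp (\<mu> i / \<sigma>\<^sup>2 * x)) - (\<Sum>i<k. w' i * a (\<mu>' i) * exp (\<mu>' i / \<sigma>\<^sup>2 * x))"
    proof -
      have 1: "(\<Sum>i<k. c i * exp (b i * x)) = (\<Sum>i<k. w i * a (\<mu> i) * exp (\<mu> i / \<sigma>\<^sup>2 * x))"
        by (rule sum.cong) (simp_all add: c_def b_def)
      have 2: "(\<Sum>i<k. c (i+k) * exp (b (i+k) * x)) = - (\<Sum>i<k. w' i * a (\<mu>' i) * exp (\<mu>' i / \<sigma>\<^sup>2 * x))"
        unfolding sum_negf[symmetric] by (rule sum.cong) (simp_all add: c_def b_def)
      show ?thesis unfolding sum_split_2k[of "\<lambda>i. c i * exp (b i * x)"] 1 2 by simp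
    qed
    moreover have G: "gauss_mix k v m \<sigma> x = E x * (\<Sum>i<k. v i * a (m i) * exp (m i / \<sigma>\<^sup>2 * x))" for v m
      unfolding gauss_mix_def nd_split[OF assms] E_def a_def by (simp add: sum_distrib_left mult_ac)
    ultimately show ?thesis by (simp add: G right_diff_distrib)
  qed
  have Epos: "E x \<noteq> 0" for x unfolding E_def by simp
  have eqv: "gauss_mix k w \<mu> \<sigma> x = gauss_mix k w' \<mu>' \<sigma> x \<longleftrightarrow> (\<Sum>i<2*k. c i * exp (b i * x)) = 0" for x
  proof -
    have "gauss_mix k w \<mu> \<sigma> x = gauss_mix k w' \<mu>' \<sigma> x \<longleftrightarrow> gauss_mix k w \<mu> \<sigma> x - gauss_mix k w' \<mu>' \<sigma> x = 0"
      by simp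
    also have "\<dots> \<longleftrightarrow> E x * (\<Sum>i<2*k. c i * exp (b i * x)) = 0" by (simp only: key)
    also have "\<dots> \<longleftrightarrow> (\<Sum>i<2*k. c i * exp (b i * x)) = 0" using Epos[of x] by simp
    finally show ?thesis .
  qed
  let ?S = "{x. gauss_mix k w \<mu> \<sigma> x = gauss_mix k w' \<mu>' \<sigma> x}"
  show ?thesis
  proof (cases "\<exists>Z. finite Z \<and> card Z = 2*k \<and> Z \<subseteq> ?S")
    case True
    then obtain Z where Z: "finite Z" "card Z = 2*k" "Z \<subseteq> ?S" by blast
    have Z0: "\<forall>z\<in>Z. (\<Sum>i<2*k. c i * exp (b i * z)) = 0"
    proof
      fix z assume "z \<in> Z"
      then have "z \<in> ?S" using Z(3) by blast
      then show "(\<Sum>i<2*k. c i * exp (b i * z)) = 0" using eqv[of z] by simp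
    qed
    have "(\<Sum>i<2*k. c i * exp (b i * x)) = 0" for x
      using exp_sum_zeros[OF Z(1) _ Z0] Z(2) by simp
    then show ?thesis using eqv by simp
  next
    case False
    have fin: "finite ?S"
    proof (rule ccontr)
      assume "infinite ?S"
      then obtain Z where "finite Z" "card Z = 2*k" "Z \<subseteq> ?S"
        using infinite_arbitrarily_large[of ?S "2*k"] by blast
      then show False using False by blast
    qed
    have "card ?S < 2*k"
    proof (rule ccontr)
      assume "\<not> card ?S < 2*k"
      then obtain Z where "Z \<subseteq> ?S" "card Z = 2*k"
        using obtain_subset_with_card_n[of "2*k" ?S] by force
      then show False using False fin finite_subset by blast
    qed
    then show ?thesis using fin by blast
  qed
qed

lemma sign_const:
  fixes h :: "real \<Rightarrow> real"
  assumes cont: "\<And>x. isCont h x"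
  assumes P: "\<And>x y z. x \<in> S \<Longrightarrow> y \<in> S \<Longrightarrow> x < z \<Longrightarrow> z < y \<Longrightarrow> z \<in> S \<and> h z \<noteq> 0"
  shows "(\<forall>x\<in>S. h x \<ge> 0) \<or> (\<forall>x\<in>S. h x \<le> 0)"
proof (rule ccontr)
  assume "\<not> ?thesis"
  then obtain x y where xy: "x \<in> S" "y \<in> S" "h x < 0" "h y > 0" by force
  have ne: "x \<noteq> y" using xy by auto
  show False
  proof (cases "x < y")
    case True
    obtain z where z: "x \<le> z" "z \<le> y" "h z = 0"
      using IVT[of h x 0 y] True xy cont by auto
    have "z \<noteq> x" "z \<noteq> y" using z xy by auto
    then show False using P[OF xy(1,2), of z] z by auto
  next
    case False
    hence "y < x" using ne by auto
    obtain z where z: "y \<le> z" "z \<le> x" "h z = 0"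
      using IVT2[of h x 0 y] \<open>y < x\<close> xy cont by auto
    have "z \<noteq> x" "z \<noteq> y" using z xy by auto
    then show False using P[OF xy(2,1), of z] z by auto
  qed
qed

lemma set_int_abs_const_sign:
  fixes h :: "real \<Rightarrow> real"
  assumes S: "S \<in> sets lborel" and int: "integrable lborel h"
  assumes sg: "(\<forall>x\<in>S. h x \<ge> 0) \<or> (\<forall>x\<in>S. h x \<le> 0)"
  shows "(LINT x:S|lborel. \<bar>h x\<bar>) = \<bar>LINT x:S|lborel. h x\<bar>"
  using sg
proof
  assume A: "\<forall>x\<in>S. h x \<ge> 0"
  have "(LINT x:S|lborel. \<bar>h x\<bar>) = (LINT x:S|lborel. h x)"
    by (rule set_lebesgue_integral_cong) (use S A in auto)
  moreover have "(LINT x:S|lborel. h x) \<ge> 0"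
    unfolding set_lebesgue_integral_def
    by (rule Bochner_Integration.integral_nonneg) (use A in \<open>auto split: split_indicator\<close>)
  ultimately show ?thesis by simp
next
  assume A: "\<forall>x\<in>S. h x \<le> 0"
  have "(LINT x:S|lborel. \<bar>h x\<bar>) = (LINT x:S|lborel. - h x)"
    by (rule set_lebesgue_integral_cong) (use S A in auto)
  also have neg: "\<dots> = - (LINT x:S|lborel. h x)"
    by (simp add: set_lebesgue_integral_def)
  finally have e: "(LINT x:S|lborel. \<bar>h x\<bar>) = - (LINT x:S|lborel. h x)" .
  have "(LINT x:S|lborel. - h x) \<ge> 0"
    unfolding set_lebesgue_integral_def
    by (rule Bochner_Integration.integral_nonneg) (use A in \<open>auto split: split_indicator\<close>)
  hence "(LINT x:S|lborel. h x) \<le> 0" using neg by simp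
  with e show ?thesis by simp
qed

lemma set_integrable_of_integrable:
  fixes h :: "real \<Rightarrow> real"
  assumes "integrable lborel h" "S \<in> sets lborel"
  shows "set_integrable lborel S h"
  unfolding set_integrable_def using integrable_mult_indicator[OF assms(2) assms(1)] by simp

lemma split_set_int:
  fixes h :: "real \<Rightarrow> real"
  assumes "integrable lborel h" "A \<in> sets lborel" "B \<in> sets lborel" "A \<inter> B = {}"
  shows "(LINT x:A\<union>B|lborel. h x) = (LINT x:A|lborel. h x) + (LINT x:B|lborel. h x)"
  by (rule set_integral_Un) (use assms set_integrable_of_integrable in auto)

lemma tv_pieces:
  fixes h :: "real \<Rightarrow> real"
  assumes cont: "\<And>x. isCont h x"
    and int: "integrable lborel h"
    and tot: "(\<integral>x. h x \<partial>lborel) = 0"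
    and finZ: "finite {x. h x = 0}"
    and Mb: "\<And>t. \<bar>LINT x:{..t}|lborel. h x\<bar> \<le> M"
  shows "(\<integral>x. \<bar>h x\<bar> \<partial>lborel) \<le> (2 * real (card {x. h x = 0}) + 2) * M"
proof -
  define Z where "Z = {x. h x = 0}"
  define H where "H = (\<lambda>t. LINT x:{..t}|lborel. h x)"
  have inta: "integrable lborel (\<lambda>x. \<bar>h x\<bar>)" using int by auto
  have M0: "M \<ge> 0" using Mb[of 0] by linarith
  have totU: "(LINT x:UNIV|lborel. g x) = (\<integral>x. g x \<partial>lborel)" for g :: "real \<Rightarrow> real"
    by (simp add: set_lebesgue_integral_def)
  have right: "(LINT x:{a<..}|lborel. h x) = - H a" for a
  proof -
    have "(LINT x:{..a}\<union>{a<..}|lborel. h x) = H a + (LINT x:{a<..}|lborel. h x)"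
      unfolding H_def by (rule split_set_int) (use int in auto)
    moreover have "{..a}\<union>{a<..} = (UNIV::real set)" by auto
    ultimately show ?thesis using tot totU[of h] by simp
  qed
  have mid: "(LINT x:{a<..b}|lborel. h x) = H b - H a" if "a \<le> b" for a b
  proof -
    have "(LINT x:{..a}\<union>{a<..b}|lborel. h x) = H a + (LINT x:{a<..b}|lborel. h x)"
      unfolding H_def by (rule split_set_int) (use int in auto)
    moreover have "{..a}\<union>{a<..b} = {..b}" using that by auto
    ultimately show ?thesis unfolding H_def by simp
  qed
  have main: "\<forall>a. card (Z \<inter> {a<..}) = n \<longrightarrow> (LINT x:{a<..}|lborel. \<bar>h x\<bar>) \<le> (2 * real n + 1) * M" for n
  proof (induction n)
    case 0
    show ?case
    proof (intro allI impI)
      fix a assume "card (Z \<inter> {a<..}) = 0"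
      hence e: "Z \<inter> {a<..} = {}" using finZ by (simp add: Z_def)
      have "(\<forall>x\<in>{a<..}. h x \<ge> 0) \<or> (\<forall>x\<in>{a<..}. h x \<le> 0)"
        by (rule sign_const[OF cont]) (use e in \<open>auto simp: Z_def\<close>)
      hence "(LINT x:{a<..}|lborel. \<bar>h x\<bar>) = \<bar>LINT x:{a<..}|lborel. h x\<bar>"
        by (intro set_int_abs_const_sign int) auto
      also have "\<dots> = \<bar>H a\<bar>" using right by simp
      also have "\<dots> \<le> M" using Mb by (simp add: H_def)
      finally show "(LINT x:{a<..}|lborel. \<bar>h x\<bar>) \<le> (2 * real 0 + 1) * M" by simp
    qed
  next
    case (Suc n)
    show ?case
    proof (intro allI impI)
      fix a assume c: "card (Z \<inter> {a<..}) = Suc n"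
      define Za where "Za = Z \<inter> {a<..}"
      have fZa: "finite Za" using finZ by (simp add: Za_def Z_def)
      have neZa: "Za \<noteq> {}" using c by (auto simp: Za_def)
      define z where "z = Min Za"
      have zZa: "z \<in> Za" using fZa neZa by (simp add: z_def)
      hence az: "a < z" and hz: "h z = 0" by (auto simp: Za_def Z_def)
      have zmin: "\<And>y. y \<in> Za \<Longrightarrow> z \<le> y" using fZa by (simp add: z_def)
      have eqZ: "Za = insert z (Z \<inter> {z<..})"
      proof
        show "Za \<subseteq> insert z (Z \<inter> {z<..})"
        proof
          fix x assume x: "x \<in> Za"
          hence "z \<le> x" using zmin by blast
          thus "x \<in> insert z (Z \<inter> {z<..})" using x by (cases "x = z") (auto simp: Za_def)
        qed
        show "insert z (Z \<inter> {z<..}) \<subseteq> Za" using zZa az by (auto simp: Za_def)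
      qed
      have "z \<notin> Z \<inter> {z<..}" by auto
      hence cz: "card (Z \<inter> {z<..}) = n"
        using c eqZ fZa by (metis Za_def card_insert_disjoint finite_insert nat.inject)
      have IH: "(LINT x:{z<..}|lborel. \<bar>h x\<bar>) \<le> (2 * real n + 1) * M" using Suc.IH cz by blast
      have "(\<forall>x\<in>{a<..z}. h x \<ge> 0) \<or> (\<forall>x\<in>{a<..z}. h x \<le> 0)"
      proof (rule sign_const[OF cont])
        fix x y w assume "x \<in> {a<..z}" "y \<in> {a<..z}" "x < w" "w < y"
        hence w: "a < w" "w < z" by auto
        have "h w \<noteq> 0"
        proof
          assume "h w = 0" hence "w \<in> Za" using w by (simp add: Za_def Z_def)
          then show False using zmin w by force
        qed
        then show "w \<in> {a<..z} \<and> h w \<noteq> 0" using w by auto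
      qed
      hence "(LINT x:{a<..z}|lborel. \<bar>h x\<bar>) = \<bar>LINT x:{a<..z}|lborel. h x\<bar>"
        by (intro set_int_abs_const_sign int) auto
      also have "\<dots> = \<bar>H z - H a\<bar>" using mid az by simp
      also have "\<dots> \<le> 2 * M" using Mb[of z] Mb[of a] unfolding H_def by linarith
      finally have P1: "(LINT x:{a<..z}|lborel. \<bar>h x\<bar>) \<le> 2 * M" .
      have "(LINT x:{a<..z}\<union>{z<..}|lborel. \<bar>h x\<bar>) = (LINT x:{a<..z}|lborel. \<bar>h x\<bar>) + (LINT x:{z<..}|lborel. \<bar>h x\<bar>)"
        by (rule split_set_int) (use inta in auto)
      moreover have "{a<..z}\<union>{z<..} = {a<..}" using az by auto
      ultimately have "(LINT x:{a<..}|lborel. \<bar>h x\<bar>) = (LINT x:{a<..z}|lborel. \<bar>h x\<bar>) + (LINT x:{z<..}|lborel. \<bar>h x\<bar>)"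
        by simp
      with P1 IH show "(LINT x:{a<..}|lborel. \<bar>h x\<bar>) \<le> (2 * real (Suc n) + 1) * M"
        by (simp add: algebra_simps)
    qed
  qed
  show ?thesis
  proof (cases "Z = {}")
    case True
    have "(\<forall>x\<in>UNIV. h x \<ge> 0) \<or> (\<forall>x\<in>UNIV. h x \<le> 0)"
      by (rule sign_const[OF cont]) (use True in \<open>auto simp: Z_def\<close>)
    hence "(LINT x:UNIV|lborel. \<bar>h x\<bar>) = \<bar>LINT x:UNIV|lborel. h x\<bar>"
      by (intro set_int_abs_const_sign int) auto
    hence "(\<integral>x. \<bar>h x\<bar> \<partial>lborel) = 0" using tot totU by simp
    then show ?thesis using M0 by simp
  next
    case False
    define z where "z = Min Z"
    have fZ: "finite Z" using finZ by (simp add: Z_def)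
    have zZ: "z \<in> Z" using fZ False by (simp add: z_def)
    have zmin: "\<And>y. y \<in> Z \<Longrightarrow> z \<le> y" using fZ by (simp add: z_def)
    have "(\<forall>x\<in>{..z}. h x \<ge> 0) \<or> (\<forall>x\<in>{..z}. h x \<le> 0)"
    proof (rule sign_const[OF cont])
      fix x y w assume "x \<in> {..z}" "y \<in> {..z}" "x < w" "w < y"
      hence w: "w < z" by auto
      have "h w \<noteq> 0"
      proof
        assume "h w = 0" hence "w \<in> Z" by (simp add: Z_def)
        then show False using zmin w by force
      qed
      then show "w \<in> {..z} \<and> h w \<noteq> 0" using w by auto
    qed
    hence "(LINT x:{..z}|lborel. \<bar>h x\<bar>) = \<bar>LINT x:{..z}|lborel. h x\<bar>"
      by (intro set_int_abs_const_sign int) auto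
    also have "\<dots> \<le> M" using Mb by simp
    finally have P1: "(LINT x:{..z}|lborel. \<bar>h x\<bar>) \<le> M" .
    have eqZ: "Z = insert z (Z \<inter> {z<..})" using zZ zmin by force
    have "z \<notin> Z \<inter> {z<..}" by auto
    hence cz: "card (Z \<inter> {z<..}) = card Z - 1"
      using eqZ fZ by (metis card_insert_disjoint diff_Suc_1 finite_Int)
    have P2: "(LINT x:{z<..}|lborel. \<bar>h x\<bar>) \<le> (2 * real (card Z - 1) + 1) * M"
      using main cz by blast
    have "(LINT x:{..z}\<union>{z<..}|lborel. \<bar>h x\<bar>) = (LINT x:{..z}|lborel. \<bar>h x\<bar>) + (LINT x:{z<..}|lborel. \<bar>h x\<bar>)"
      by (rule split_set_int) (use inta in auto)
    moreover have "{..z}\<union>{z<..} = (UNIV :: real set)" by auto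
    ultimately have "(\<integral>x. \<bar>h x\<bar> \<partial>lborel) = (LINT x:{..z}|lborel. \<bar>h x\<bar>) + (LINT x:{z<..}|lborel. \<bar>h x\<bar>)"
      using totU by simp
    also have "\<dots> \<le> M + (2 * real (card Z - 1) + 1) * M" using P1 P2 by simp
    also have "\<dots> \<le> (2 * real (card Z) + 2) * M"
    proof -
      have "real (card Z - 1) \<le> real (card Z)" by simp
      from mult_right_mono[OF this M0] show ?thesis by (simp add: algebra_simps)
    qed
    finally show ?thesis by (simp add: Z_def)
  qed
qed

lemma density_prob:
  assumes "is_density f"
  shows "prob_space (density lborel f)"
proof
  have m: "f \<in> borel_measurable lborel" and nn: "\<And>x. 0 \<le> f x" and i: "integrable lborel f"
    and one: "(\<integral>x. f x \<partial>lborel) = 1"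
    using assms by (auto simp: is_density_def)
  have "emeasure (density lborel f) (space (density lborel f)) = (\<integral>\<^sup>+x. ennreal (f x) \<partial>lborel)"
    using m by (simp add: emeasure_density)
  also have "\<dots> = ennreal (\<integral>x. f x \<partial>lborel)"
    using i nn by (intro nn_integral_eq_integral) auto
  finally show "emeasure (density lborel f) (space (density lborel f)) = 1" using one by simp
qed

lemma sample_prob:
  assumes "is_density f"
  shows "prob_space (sample_law n f)"
  unfolding sample_law_def by (rule prob_space_PiM) (use density_prob[OF assms] in auto)

lemma sets_density_borel: "sets (density lborel f) = sets borel" by simp

lemma exp_neg_bound:
  fixes s :: real assumes "0 \<le> s"
  shows "exp (-s) \<le> 1 - s + s\<^sup>2"
proof -
  have p: "1 + s > 0" using assms by simp
  have "exp (-s) = 1 / exp s" by (simp add: exp_minus field_simps)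
  also have "\<dots> \<le> 1 / (1 + s)"
    using p exp_ge_add_one_self[of s] by (intro divide_left_mono) auto
  also have "\<dots> \<le> 1 - s + s\<^sup>2"
  proof -
    have "1 \<le> (1 - s + s\<^sup>2) * (1 + s)" using assms by (simp add: algebra_simps power2_eq_square power3_eq_cube)
    thus ?thesis using p by (simp add: divide_simps)
  qed
  finally show ?thesis .
qed

lemma mgf_count:
  assumes dens: "is_density f" and S: "S \<in> sets borel"
  shows "(\<integral>x. exp (l * (\<Sum>i<n. indicator S (x i))) \<partial>sample_law n f)
        = (1 + (exp l - 1) * measure (density lborel f) S) ^ n"
proof -
  let ?P = "density lborel f"
  interpret P: prob_space ?P using density_prob[OF dens] .
  interpret PS: product_prob_space "\<lambda>_. ?P" "{..<n}"
    by unfold_locales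
  have eq: "exp (l * (\<Sum>i<n. indicator S (x i))) = (\<Prod>i\<in>{..<n}. exp (l * indicator S (x i)))" for x :: "nat \<Rightarrow> real"
    by (subst sum_distrib_left) (rule exp_sum, simp)
  have intg: "integrable ?P (\<lambda>y. exp (l * indicator S y))"
  proof (rule P.integrable_const_bound[where B = "exp \<bar>l\<bar>"])
    show "AE x in ?P. norm (exp (l * indicator S x)) \<le> exp \<bar>l\<bar>"
      by (auto split: split_indicator)
    show "(\<lambda>y. exp (l * indicator S y)) \<in> borel_measurable ?P" using S by measurable
  qed
  have one: "(\<integral>y. exp (l * indicator S y) \<partial>?P) = 1 + (exp l - 1) * measure ?P S"
  proof -
    have "(\<integral>y. exp (l * indicator S y) \<partial>?P) = (\<integral>y. 1 + (exp l - 1) * indicator S y \<partial>?P)"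
      by (intro Bochner_Integration.integral_cong) (auto split: split_indicator)
    also have "\<dots> = 1 + (exp l - 1) * (\<integral>y. indicator S y \<partial>?P)"
    proof -
      have ii: "integrable ?P (\<lambda>y. (exp l - 1) * indicator S y)"
        using S by (intro integrable_mult_right P.integrable_const_bound[where B=1]) (auto split: split_indicator)
      have pu: "measure ?P UNIV = 1" using P.prob_space by simp
      show ?thesis by (subst Bochner_Integration.integral_add) (use ii pu in auto)
    qed
    also have "(\<integral>y. indicator S y \<partial>?P) = measure ?P S"
      using S by (simp add: integral_indicator)
    finally show ?thesis .
  qed
  have "(\<integral>x. exp (l * (\<Sum>i<n. indicator S (x i))) \<partial>sample_law n f)
      = (\<integral>x. (\<Prod>i\<in>{..<n}. exp (l * indicator S (x i))) \<partial>Pi\<^sub>M {..<n} (\<lambda>_. ?P))"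
    unfolding sample_law_def eq ..
  also have "\<dots> = (\<Prod>i\<in>{..<n}. (\<integral>y. exp (l * indicator S y) \<partial>?P))"
    by (rule PS.product_integral_prod) (use intg in auto)
  also have "\<dots> = (1 + (exp l - 1) * measure ?P S) ^ n" using one by simp
  finally show ?thesis .
qed

lemma count_tail:
  assumes dens: "is_density f" and S: "S \<in> sets borel" and s: "0 < s" "s \<le> 1"
  shows "measure (sample_law n f) {x\<in>space (sample_law n f).
      \<bar>(\<Sum>i<n. indicator S (x i)) - real n * measure (density lborel f) S\<bar> \<ge> t}
    \<le> 2 * exp (real n * measure (density lborel f) S * s\<^sup>2 - s * t)"
proof -
  define p where "p = measure (density lborel f) S"
  define cnt where "cnt = (\<lambda>x::nat\<Rightarrow>real. (\<Sum>i<n. indicator S (x i) :: real))"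
  define M where "M = sample_law n f"
  interpret M: prob_space M unfolding M_def using sample_prob[OF dens] .
  interpret P: prob_space "density lborel f" using density_prob[OF dens] .
  have p01: "0 \<le> p" "p \<le> 1" unfolding p_def by auto
  have cntm: "cnt \<in> borel_measurable M"
    unfolding cnt_def M_def sample_law_def using S by measurable
  have intg: "integrable M (\<lambda>x. exp (l * cnt x))" for l
  proof (rule M.integrable_const_bound[where B = "exp (\<bar>l\<bar> * n)"])
    show "AE x in M. norm (exp (l * cnt x)) \<le> exp (\<bar>l\<bar> * n)"
    proof (intro AE_I2)
      fix x
      have "\<bar>cnt x\<bar> \<le> n"
      proof -
        have "\<bar>cnt x\<bar> \<le> (\<Sum>i<n. \<bar>indicator S (x i) :: real\<bar>)" unfolding cnt_def by (rule sum_abs)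
        also have "\<dots> \<le> (\<Sum>i<n. 1)" by (intro sum_mono) (auto split: split_indicator)
        finally show ?thesis by simp
      qed
      hence "l * cnt x \<le> \<bar>l\<bar> * n"
        by (metis abs_ge_self abs_mult abs_of_nat mult_left_mono abs_ge_zero order_trans)
      thus "norm (exp (l * cnt x)) \<le> exp (\<bar>l\<bar> * n)" by simp
    qed
    show "(\<lambda>x. exp (l * cnt x)) \<in> borel_measurable M" using cntm by measurable
  qed
  have sintg: "set_integrable M (space M) (\<lambda>x. exp (l * cnt x))" for l
    unfolding set_integrable_def using integrable_mult_indicator[OF sets.top intg[of l]] by simp
  have mgf: "(\<integral>x. exp (l * cnt x) \<partial>M) = (1 + (exp l - 1) * p) ^ n" for l
    unfolding M_def cnt_def p_def using mgf_count[OF dens S] by simp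
  have pw: "(1 + (exp l - 1) * p) ^ n \<le> exp (real n * ((exp l - 1) * p))" for l
  proof -
    have "0 \<le> 1 + (exp l - 1) * p"
    proof -
      have "(exp l - 1) * p \<ge> (0 - 1) * p" using p01 by (intro mult_right_mono) auto
      thus ?thesis using p01 by simp
    qed
    hence "(1 + (exp l - 1) * p) ^ n \<le> exp ((exp l - 1) * p) ^ n"
      by (intro power_mono exp_ge_add_one_self) 
    also have "\<dots> = exp (real n * ((exp l - 1) * p))" by (simp add: exp_of_nat_mult)
    finally show ?thesis .
  qed
  have up: "measure M {x\<in>space M. cnt x \<ge> n * p + t} \<le> exp (real n * p * s\<^sup>2 - s * t)"
  proof -
    have "measure M {x\<in>space M. cnt x \<ge> n * p + t} \<le> exp (-s * (n * p + t)) * (\<integral>x\<in>space M. exp (s * cnt x) \<partial>M)"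
      by (rule M.Chernoff_ineq_ge[OF s(1) sintg]) simp
    also have "(\<integral>x\<in>space M. exp (s * cnt x) \<partial>M) = (1 + (exp s - 1) * p) ^ n"
      using set_integral_space[OF intg[of s]] mgf by simp
    also have "exp (-s * (n * p + t)) * \<dots> \<le> exp (-s * (n * p + t)) * exp (real n * ((exp s - 1) * p))"
      by (intro mult_left_mono pw) auto
    also have "\<dots> = exp (-s * (n * p + t) + real n * ((exp s - 1) * p))" by (simp only: exp_add)
    also have "\<dots> \<le> exp (real n * p * s\<^sup>2 - s * t)"
    proof -
      have "exp s - 1 \<le> s + s\<^sup>2" using exp_bound[of s] s by simp
      hence "real n * ((exp s - 1) * p) \<le> real n * ((s + s\<^sup>2) * p)"
        using p01 by (intro mult_left_mono mult_right_mono) auto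
      thus ?thesis by (simp add: algebra_simps)
    qed
    finally show ?thesis .
  qed
  have lo: "measure M {x\<in>space M. cnt x \<le> n * p - t} \<le> exp (real n * p * s\<^sup>2 - s * t)"
  proof -
    have "measure M {x\<in>space M. cnt x \<le> n * p - t} \<le> exp (s * (n * p - t)) * (\<integral>x\<in>space M. exp (-s * cnt x) \<partial>M)"
      by (rule M.Chernoff_ineq_le[OF s(1) sintg]) simp
    also have "(\<integral>x\<in>space M. exp (-s * cnt x) \<partial>M) = (1 + (exp (-s) - 1) * p) ^ n"
      using set_integral_space[OF intg[of "-s"]] mgf[of "-s"] by simp
    also have "exp (s * (n * p - t)) * \<dots> \<le> exp (s * (n * p - t)) * exp (real n * ((exp (-s) - 1) * p))"
      by (intro mult_left_mono pw) auto
    also have "\<dots> = exp (s * (n * p - t) + real n * ((exp (-s) - 1) * p))" by (simp only: exp_add)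
    also have "\<dots> \<le> exp (real n * p * s\<^sup>2 - s * t)"
    proof -
      have "exp (-s) - 1 \<le> -s + s\<^sup>2" using exp_neg_bound[of s] s by simp
      hence "real n * ((exp (-s) - 1) * p) \<le> real n * ((-s + s\<^sup>2) * p)"
        using p01 by (intro mult_left_mono mult_right_mono) auto
      thus ?thesis by (simp add: algebra_simps)
    qed
    finally show ?thesis .
  qed
  have sub: "{x\<in>space M. \<bar>cnt x - real n * p\<bar> \<ge> t} \<subseteq>
      {x\<in>space M. cnt x \<ge> n * p + t} \<union> {x\<in>space M. cnt x \<le> n * p - t}" by auto
  have "measure M {x\<in>space M. \<bar>cnt x - real n * p\<bar> \<ge> t} \<le>
      measure M ({x\<in>space M. cnt x \<ge> n * p + t} \<union> {x\<in>space M. cnt x \<le> n * p - t})"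
    by (rule M.finite_measure_mono[OF sub]) (use cntm in measurable)
  also have "\<dots> \<le> measure M {x\<in>space M. cnt x \<ge> n * p + t} + measure M {x\<in>space M. cnt x \<le> n * p - t}"
    by (intro measure_Un_le) (use cntm in measurable)
  also have "\<dots> \<le> 2 * exp (real n * p * s\<^sup>2 - s * t)" using up lo by simp
  finally show ?thesis unfolding M_def cnt_def p_def .
qed

lemma dens_real_dist:
  assumes "is_density f" shows "real_distribution (density lborel f)"
proof -
  interpret prob_space "density lborel f" using density_prob[OF assms] .
  show ?thesis by unfold_locales simp
qed

lemma dens_point0:
  assumes "is_density f" shows "measure (density lborel f) {x} = 0"
proof -
  have m: "f \<in> borel_measurable lborel" using assms by (simp add: is_density_def)
  have "emeasure (density lborel f) {x} = set_nn_integral lborel {x} f"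
    using m by (simp add: emeasure_density)
  also have "\<dots> = 0" by (simp add: nn_integral_indicator_singleton)
  finally show ?thesis by (simp add: measure_def)
qed

lemma dens_cont:
  assumes "is_density f" shows "isCont (cdf (density lborel f)) x"
proof -
  interpret real_distribution "density lborel f" using dens_real_dist[OF assms] .
  show ?thesis using isCont_cdf dens_point0[OF assms] by simp
qed

lemma Tset_borel:
  assumes "is_density f" shows "{x. cdf (density lborel f) x \<le> u} \<in> sets borel"
proof -
  interpret real_distribution "density lborel f" using dens_real_dist[OF assms] .
  have "mono (cdf (density lborel f))" by (simp add: mono_def cdf_nondecreasing)
  hence "cdf (density lborel f) \<in> borel_measurable borel" by (rule borel_measurable_mono)
  thus ?thesis by measurable
qed

lemma Tset_measure:
  assumes dens: "is_density f" and u: "0 \<le> u" "u \<le> 1"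
  shows "measure (density lborel f) {x. cdf (density lborel f) x \<le> u} = u"
proof -
  define P where "P = density lborel f"
  define F where "F = cdf P"
  define T where "T = {x. F x \<le> u}"
  interpret real_distribution P unfolding P_def using dens_real_dist[OF dens] .
  have cont: "\<And>x. isCont F x" unfolding F_def P_def using dens_cont[OF dens] .
  have mono: "\<And>x y. x \<le> y \<Longrightarrow> F x \<le> F y" unfolding F_def by (rule cdf_nondecreasing)
  have le1: "\<And>x. F x \<le> 1" unfolding F_def by (rule cdf_bounded_prob)
  show ?thesis
  proof (cases "u = 1")
    case True
    hence "T = UNIV" using le1 by (auto simp: T_def)
    thus ?thesis using True prob_space by (simp add: T_def F_def P_def)
  next
    case False
    hence u1: "u < 1" using u by simp
    have "eventually (\<lambda>x. F x > u) at_top"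
      using cdf_lim_at_top_prob u1 unfolding F_def by (rule order_tendstoD)
    then obtain x0 where x0: "F x0 > u" by (metis eventually_at_top_linorder order_refl)
    have bdd: "\<And>x. x \<in> T \<Longrightarrow> x \<le> x0"
    proof -
      fix x assume "x \<in> T"
      hence "F x \<le> u" by (simp add: T_def)
      thus "x \<le> x0" using mono[of x0 x] x0 by (meson linear not_less order_trans)
    qed
    show ?thesis
    proof (cases "T = {}")
      case True
      have "u \<le> 0"
      proof (rule ccontr)
        assume "\<not> u \<le> 0" hence "u > 0" by simp
        have "eventually (\<lambda>x. F x < u) at_bot"
          unfolding F_def by (rule order_tendstoD(2)[OF cdf_lim_at_bot \<open>u > 0\<close>])
        then obtain y where "F y < u" by (metis eventually_at_bot_linorder order_refl)
        hence "y \<in> T" by (simp add: T_def)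
        thus False using True by simp
      qed
      hence "u = 0" using u by simp
      thus ?thesis using True by (simp add: T_def F_def P_def)
    next
      case False
      have cl: "closed T" unfolding T_def
        by (rule closed_Collect_le) (use cont in \<open>auto intro: continuous_at_imp_continuous_on continuous_on_const\<close>)
      have bddT: "bdd_above T" by (rule bdd_aboveI[of _ x0]) (rule bdd)
      define s where "s = Sup T"
      have sT: "s \<in> T" unfolding s_def using closed_contains_Sup[OF False bddT cl] .
      hence Fs: "F s \<le> u" by (simp add: T_def)
      have sx0: "s \<le> x0" using bdd sT by blast
      have "F s = u"
      proof (rule ccontr)
        assume "F s \<noteq> u" hence lt: "F s < u" using Fs by simp
        obtain z where z: "s \<le> z" "z \<le> x0" "F z = u"
          using IVT[of F s u x0] lt x0 sx0 cont by auto
        hence "z \<in> T" by (simp add: T_def)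
        hence "z \<le> s" unfolding s_def using bddT by (rule cSup_upper)
        hence "z = s" using z by simp
        thus False using z lt by simp
      qed
      have "T = {..s}"
      proof
        show "T \<subseteq> {..s}" unfolding s_def using bddT by (auto intro: cSup_upper)
        show "{..s} \<subseteq> T" using mono \<open>F s = u\<close> by (auto simp: T_def)
      qed
      hence "measure P T = F s" by (simp add: F_def cdf_def)
      thus ?thesis using \<open>F s = u\<close> by (simp add: T_def F_def P_def)
    qed
  qed
qed

definition Tset :: "(real \<Rightarrow> real) \<Rightarrow> real \<Rightarrow> real set" where
  "Tset f u = {x. cdf (density lborel f) x \<le> u}"

definition cnt :: "nat \<Rightarrow> real set \<Rightarrow> (nat \<Rightarrow> real) \<Rightarrow> real" where
  "cnt n S x = (\<Sum>i<n. indicator S (x i))"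

definition cell :: "(real \<Rightarrow> real) \<Rightarrow> nat \<Rightarrow> nat \<Rightarrow> real set" where
  "cell f l i = Tset f ((real i + 1) / 2^l) - Tset f (real i / 2^l)"

lemma Tset_mono: "u \<le> v \<Longrightarrow> Tset f u \<subseteq> Tset f v"
  unfolding Tset_def by auto

lemma cnt_nonneg: "0 \<le> cnt n S x"
  unfolding cnt_def by (intro sum_nonneg) auto

lemma cnt_split: "A \<subseteq> B \<Longrightarrow> cnt n B x = cnt n A x + cnt n (B - A) x"
  unfolding cnt_def by (subst sum.distrib[symmetric]) (intro sum.cong, auto split: split_indicator)

lemma cnt_mono: "A \<subseteq> B \<Longrightarrow> cnt n A x \<le> cnt n B x"
  using cnt_split[of A B n x] cnt_nonneg[of n "B - A" x] by simp

lemma cnt_UNIV: "cnt n UNIV x = real n"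
  unfolding cnt_def by simp

lemma Tset_one: assumes "is_density f" shows "Tset f 1 = UNIV"
proof -
  interpret real_distribution "density lborel f" using dens_real_dist[OF assms] .
  show ?thesis unfolding Tset_def using cdf_bounded_prob by auto
qed

lemma chain:
  assumes dens: "is_density f"
  assumes good: "\<And>l i. l \<in> {1..J} \<Longrightarrow> i < 2^l \<Longrightarrow> \<bar>cnt n (cell f l i) x - real n / 2^l\<bar> \<le> s l"
  assumes s0: "\<And>l. 0 \<le> s l"
  shows "j \<le> J \<Longrightarrow> 1 \<le> m \<Longrightarrow> m \<le> 2^j \<Longrightarrow>
    \<bar>cnt n (Tset f (real m / 2^j)) x - real n * real m / 2^j\<bar> \<le> (\<Sum>l\<in>{1..j}. s l)"
proof (induction j arbitrary: m)
  case 0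
  hence "m = 1" by simp
  then show ?case using Tset_one[OF dens] by (simp add: cnt_UNIV)
next
  case (Suc j)
  have sm: "(\<Sum>l\<in>{1..j}. s l) + s (Suc j) = (\<Sum>l\<in>{1..Suc j}. s l)" by simp
  show ?case
  proof (cases "even m")
    case True
    then obtain k where k: "m = 2 * k" by blast
    have k1: "1 \<le> k" "k \<le> 2^j" using Suc.prems k by auto
    have IH: "\<bar>cnt n (Tset f (real k / 2^j)) x - real n * real k / 2^j\<bar> \<le> (\<Sum>l\<in>{1..j}. s l)"
      using Suc.IH[OF _ k1] Suc.prems by simp
    have e: "real m / 2^Suc j = real k / 2^j" using k by simp
    have "(\<Sum>l\<in>{1..j}. s l) \<le> (\<Sum>l\<in>{1..Suc j}. s l)" using sm s0[of "Suc j"] by linarith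
    moreover have e': "real n * real m / 2^Suc j = real n * real k / 2^j" using k by (simp add: field_simps)
    ultimately show ?thesis unfolding e e' using IH by linarith
  next
    case False
    then obtain k where k: "m = 2 * k + 1" using oddE by blast
    have k1: "1 \<le> k + 1" "k + 1 \<le> 2^j" using Suc.prems k by auto
    have IH: "\<bar>cnt n (Tset f (real (k+1) / 2^j)) x - real n * real (k+1) / 2^j\<bar> \<le> (\<Sum>l\<in>{1..j}. s l)"
      using Suc.IH[OF _ k1] Suc.prems by simp
    have i: "2 * k + 1 < 2 ^ Suc j" using k1 by simp
    have G: "\<bar>cnt n (cell f (Suc j) (2*k+1)) x - real n / 2^Suc j\<bar> \<le> s (Suc j)"
      using good[of "Suc j" "2*k+1"] i Suc.prems by simp
    have e1: "(real (2*k+1) + 1) / 2^Suc j = real (k+1) / 2^j" by (simp add: field_simps)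
    have e2: "real m / 2^Suc j = real (2*k+1) / 2^Suc j" using k by simp
    have sub: "Tset f (real (2*k+1) / 2^Suc j) \<subseteq> Tset f (real (k+1) / 2^j)"
      by (rule Tset_mono) (simp add: field_simps)
    have split: "cnt n (Tset f (real (k+1) / 2^j)) x =
        cnt n (Tset f (real (2*k+1) / 2^Suc j)) x + cnt n (cell f (Suc j) (2*k+1)) x"
      using cnt_split[OF sub] unfolding cell_def e1 by simp
    have e3: "real n * real m / 2^Suc j = real n * real (k+1) / 2^j - real n / 2^Suc j"
      using k by (simp add: field_simps)
    show ?thesis unfolding e2 using IH G split e3 k sm by (simp add: abs_le_iff)
  qed
qed

lemma grid_to_all:
  assumes dens: "is_density f"
  assumes G: "\<And>m. 1 \<le> m \<Longrightarrow> m \<le> 2^J \<Longrightarrow>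
    \<bar>cnt n (Tset f (real m / 2^J)) x - real n * real m / 2^J\<bar> \<le> D"
  assumes D0: "0 \<le> D"
  shows "\<bar>cnt n {..t} x - real n * cdf (density lborel f) t\<bar> \<le> real n / 2^J + D"
proof -
  interpret real_distribution "density lborel f" using dens_real_dist[OF dens] .
  define F where "F = cdf (density lborel f)"
  define N :: real where "N = 2^J"
  define v where "v = F t"
  have N1: "N \<ge> 1" by (simp add: N_def)
  have v01: "0 \<le> v" "v \<le> 1" unfolding v_def F_def using cdf_nonneg cdf_bounded_prob by auto
  have mono: "\<And>x y. x \<le> y \<Longrightarrow> F x \<le> F y" unfolding F_def by (rule cdf_nondecreasing)
  have upper: "cnt n {..t} x \<le> real n * v + real n / N + D"
  proof -
    define m :: nat where "m = max 1 (nat \<lceil>v * N\<rceil>)"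
    have m1: "1 \<le> m" by (simp add: m_def)
    have vN: "v * N \<le> N" using v01 N1 by simp
    have mN: "m \<le> 2^J"
    proof -
      have "nat \<lceil>v * N\<rceil> \<le> nat \<lceil>N\<rceil>" using vN by (intro nat_mono ceiling_mono)
      also have "nat \<lceil>N\<rceil> = 2^J" by (simp add: N_def)
      finally show ?thesis unfolding m_def by simp
    qed
    have mlo: "v \<le> real m / N"
    proof -
      have "v * N \<le> real (nat \<lceil>v * N\<rceil>)" by linarith
      also have "\<dots> \<le> real m" by (simp add: m_def)
      finally show ?thesis using N1 by (simp add: field_simps)
    qed
    have mhi: "real m / N \<le> v + 1 / N"
    proof -
      have "real m \<le> v * N + 1"
      proof (cases "nat \<lceil>v * N\<rceil> \<le> 1")
        case True thus ?thesis using v01 N1 by (simp add: m_def)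
      next
        case False
        hence "real m = real (nat \<lceil>v * N\<rceil>)" by (simp add: m_def)
        also have "\<dots> = real_of_int \<lceil>v * N\<rceil>" using v01 N1 by simp
        also have "\<dots> \<le> v * N + 1" using ceiling_correct[of "v * N"] by linarith
        finally show ?thesis .
      qed
      thus ?thesis using N1 by (simp add: field_simps)
    qed
    have sub: "{..t} \<subseteq> Tset f (real m / N)"
      unfolding Tset_def using mono mlo by (auto simp: F_def v_def intro: order_trans)
    have "cnt n {..t} x \<le> cnt n (Tset f (real m / N)) x" by (rule cnt_mono[OF sub])
    also have "\<dots> \<le> real n * real m / N + D" using G[OF m1 mN] by (simp add: N_def abs_le_iff)
    also have "real n * real m / N \<le> real n * (v + 1/N)"
      using mhi by (simp add: mult_left_mono times_divide_eq_right[symmetric] del: times_divide_eq_right)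
    finally show ?thesis by (simp add: algebra_simps)
  qed
  have lower: "real n * v - real n / N - D \<le> cnt n {..t} x"
  proof (cases "v * N \<le> 1")
    case True
    hence "v \<le> 1 / N" using N1 by (simp add: field_simps)
    hence "real n * v \<le> real n * (1 / N)" by (intro mult_left_mono) auto
    hence "real n * v \<le> real n / N" by simp
    thus ?thesis using cnt_nonneg[of n "{..t}" x] D0 by linarith
  next
    case False
    define m :: nat where "m = nat \<lceil>v * N\<rceil> - 1"
    have c2: "\<lceil>v * N\<rceil> \<ge> 2" using False by linarith
    have n2: "nat \<lceil>v * N\<rceil> \<ge> 1" using c2 by linarith
    have r1: "real m = real (nat \<lceil>v * N\<rceil>) - 1" using n2 by (simp add: m_def of_nat_diff)
    have r2: "real (nat \<lceil>v * N\<rceil>) = real_of_int \<lceil>v * N\<rceil>" using c2 by simp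
    have mreal: "real m = real_of_int \<lceil>v * N\<rceil> - 1" using r1 r2 by simp
    have "nat \<lceil>v * N\<rceil> \<ge> 2" using c2 by linarith
    hence m1: "1 \<le> m" by (simp add: m_def)
    have mlt: "real m < v * N" using mreal ceiling_correct[of "v * N"] by linarith
    have mge: "v * N - 1 \<le> real m" using mreal ceiling_correct[of "v * N"] by linarith
    have mN: "m \<le> 2^J"
    proof -
      have "real m \<le> N" using mlt v01 N1 by (smt (verit) mult_left_le_one_le)
      thus ?thesis by (simp add: N_def)
    qed
    have sub: "Tset f (real m / N) \<subseteq> {..t}"
    proof
      fix y assume "y \<in> Tset f (real m / N)"
      hence "F y \<le> real m / N" by (simp add: Tset_def F_def)
      also have "\<dots> < v" using mlt N1 by (simp add: field_simps)
      finally have "F y < F t" by (simp add: v_def)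
      thus "y \<in> {..t}" using mono[of t y] by (cases "y \<le> t") auto
    qed
    have "real n * v - real n / N - D \<le> real n * real m / N - D"
    proof -
      have "v - 1 / N = (v * N - 1) / N" using N1 by (simp add: field_simps)
      also have "\<dots> \<le> real m / N" using mge N1 by (intro divide_right_mono) auto
      finally have "v - 1 / N \<le> real m / N" .
      hence "real n * (v - 1/N) \<le> real n * (real m / N)" by (intro mult_left_mono) auto
      thus ?thesis by (simp add: algebra_simps)
    qed
    also have "\<dots> \<le> cnt n (Tset f (real m / N)) x" using G[OF m1 mN] by (simp add: N_def abs_le_iff)
    also have "\<dots> \<le> cnt n {..t} x" by (rule cnt_mono[OF sub])
    finally show ?thesis .
  qed
  show ?thesis using upper lower by (simp add: abs_le_iff v_def F_def N_def algebra_simps)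
qed

lemma arith_pow1: "l \<ge> 1 \<Longrightarrow> 2 * real l + 2 \<le> 4 * (81/50::real) ^ l"
proof (induction l)
  case 0 then show ?case by simp
next
  case (Suc l)
  show ?case
  proof (cases "l = 0")
    case True then show ?thesis by simp
  next
    case False
    hence IH: "2 * real l + 2 \<le> 4 * (81/50::real) ^ l" using Suc.IH by simp
    have "2 * real (Suc l) + 2 \<le> (81/50) * (2 * real l + 2)" using False by simp
    also have "\<dots> \<le> (81/50) * (4 * (81/50::real) ^ l)" using IH by simp
    finally show ?thesis by simp
  qed
qed

lemma arith_sqrt_term: "l \<ge> 1 \<Longrightarrow> sqrt ((2 * real l + 2) / 2^l) \<le> 2 * (9/10) ^ l"
proof -
  assume l: "l \<ge> 1"
  have "(2 * real l + 2) / 2^l \<le> 4 * (81/50::real) ^ l / 2^l"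
    using arith_pow1[OF l] by (intro divide_right_mono) auto
  also have "\<dots> = (2 * (9/10::real) ^ l)\<^sup>2"
    by (simp add: power2_eq_square power_mult_distrib[symmetric] power_divide field_simps)
  finally have "(2 * real l + 2) / 2^l \<le> (2 * (9/10::real) ^ l)\<^sup>2" .
  hence "sqrt ((2 * real l + 2) / 2^l) \<le> sqrt ((2 * (9/10::real) ^ l)\<^sup>2)" by (rule real_sqrt_le_mono)
  also have "sqrt ((2 * (9/10::real) ^ l)\<^sup>2) = 2 * (9/10) ^ l" by (subst real_sqrt_abs) simp
  finally show ?thesis .
qed

lemma geom_09: "(\<Sum>l\<in>{1..J}. (9/10::real) ^ l) = 9 * (1 - (9/10) ^ J)"
  by (induction J) (simp_all add: field_simps)

lemma geom_09_le: "(\<Sum>l\<in>{1..J}. (9/10::real) ^ l) \<le> 9"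
  unfolding geom_09 by simp

lemma geom_half: "(\<Sum>l\<in>{1..J}. (1/2::real) ^ l) = 1 - (1/2) ^ J"
  by (induction J) (simp_all add: field_simps)

lemma sum_lin: "(\<Sum>l\<in>{1..J}. 2 * real l + 2) \<le> (real J + 2)\<^sup>2"
proof -
  have "(\<Sum>l\<in>{1..J}. 2 * real l + 2) = real J * real J + 3 * real J"
    by (induction J) (simp_all add: field_simps)
  thus ?thesis by (simp add: power2_eq_square algebra_simps)
qed

lemma sq_le_pow: "(real J + 2)\<^sup>2 \<le> 5 * 2 ^ J"
proof (induction J)
  case 0 then show ?case by simp
next
  case (Suc J)
  show ?case
  proof (cases "J = 0")
    case True then show ?thesis by simp
  next
    case False
    hence j1: "1 \<le> real J" by simp
    have "1 \<le> real J * real J + real J * 2" using j1 mult_mono[OF j1 j1] by linarith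
    hence "(real (Suc J) + 2)\<^sup>2 \<le> 2 * (real J + 2)\<^sup>2"
      by (simp add: power2_eq_square algebra_simps)
    also have "\<dots> \<le> 2 * (5 * 2 ^ J)" using Suc.IH by simp
    finally show ?thesis by simp
  qed
qed

lemma choose_J:
  fixes r :: real assumes "0 < r" "r \<le> 1"
  shows "\<exists>J. (1/2) ^ J \<le> r \<and> r * 2 ^ J < 2"
proof -
  obtain J0 where "(1/2::real) ^ J0 < r" using real_arch_pow_inv[of r "1/2"] assms by auto
  define J where "J = (LEAST J. (1/2::real) ^ J \<le> r)"
  have J: "(1/2::real) ^ J \<le> r" unfolding J_def
    by (rule LeastI[of _ J0]) (use \<open>(1/2::real) ^ J0 < r\<close> in auto)
  have "r * 2 ^ J < 2"
  proof (cases J)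
    case 0 then show ?thesis using assms by simp
  next
    case (Suc K)
    have "\<not> (1/2::real) ^ K \<le> r"
    proof
      assume "(1/2::real) ^ K \<le> r"
      hence "J \<le> K" unfolding J_def by (rule Least_le)
      thus False using Suc by simp
    qed
    hence "r < (1/2) ^ K" by simp
    hence "r * 2 ^ K < 1" by (simp add: field_simps power_divide)
    thus ?thesis using Suc by simp
  qed
  thus ?thesis using J by blast
qed

lemma chern_choice:
  fixes L q :: real
  assumes L: "0 < L" and q: "0 < q"
  defines "lam \<equiv> (if L \<le> q then sqrt (L / q) else 1)"
  defines "sd \<equiv> 2 * sqrt (L * q) + 2 * L"
  shows "0 < lam" "lam \<le> 1" "q * lam\<^sup>2 - lam * sd \<le> - L"
proof -
  show "0 < lam" using L q by (simp add: lam_def)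
  show "lam \<le> 1" using L q by (simp add: lam_def)
  show "q * lam\<^sup>2 - lam * sd \<le> - L"
  proof (cases "L \<le> q")
    case True
    have l: "lam = sqrt (L / q)" using True by (simp add: lam_def)
    have "q * lam\<^sup>2 = L" using L q by (simp add: l)
    moreover have "lam * (2 * sqrt (L * q)) = 2 * L"
    proof -
      have "lam * sqrt (L * q) = sqrt (L / q * (L * q))" unfolding l by (rule real_sqrt_mult[symmetric])
      also have "L / q * (L * q) = L\<^sup>2" using q by (simp add: power2_eq_square)
      finally show ?thesis using L by simp
    qed
    moreover have "lam * (2 * L) \<ge> 0" using L \<open>0 < lam\<close> by simp
    ultimately show ?thesis unfolding sd_def by (simp add: algebra_simps)
  next
    case False
    hence l1: "lam = 1" by (simp add: lam_def)
    have hs: "sqrt (L * q) \<ge> 0" using L q by simp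
    show ?thesis unfolding sd_def l1 power_one mult_1_left mult_1_right using hs False by linarith
  qed
qed

lemma cell_borel: "is_density f \<Longrightarrow> cell f l i \<in> sets borel"
  unfolding cell_def Tset_def using Tset_borel by blast

lemma cell_measure:
  assumes dens: "is_density f" and i: "i < 2^l"
  shows "measure (density lborel f) (cell f l i) = 1 / 2^l"
proof -
  interpret P: prob_space "density lborel f" using density_prob[OF dens] .
  have i1: "real i + 1 \<le> 2^l"
  proof -
    have "i + 1 \<le> 2^l" using i by simp
    hence "real (i + 1) \<le> real (2^l)" by (simp only: of_nat_le_iff)
    thus ?thesis by simp
  qed
  have u1: "(real i + 1) / 2^l \<le> 1" using i1 by simp
  have "real i \<le> 2^l" using i1 by linarith
  hence u0: "0 \<le> real i / 2^l" "real i / 2^l \<le> 1" by auto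
  have sub: "Tset f (real i / 2^l) \<subseteq> Tset f ((real i + 1) / 2^l)"
    by (rule Tset_mono) (simp add: divide_right_mono)
  have "measure (density lborel f) (cell f l i)
      = measure (density lborel f) (Tset f ((real i + 1) / 2^l)) - measure (density lborel f) (Tset f (real i / 2^l))"
    unfolding cell_def
    by (rule P.finite_measure_Diff) (use sub Tset_borel[OF dens] in \<open>auto simp: Tset_def\<close>)
  also have "\<dots> = (real i + 1) / 2^l - real i / 2^l"
    using Tset_measure[OF dens] u1 u0 by (simp add: Tset_def)
  also have "\<dots> = 1 / 2^l" by (simp add: field_simps)
  finally show ?thesis .
qed

lemma exp_L:
  fixes \<delta> :: real assumes "0 < \<delta>"
  shows "exp (- (ln (1/\<delta>) + (2 * real l + 1) * ln 2)) = \<delta> / 2^(2*l+1)"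
proof -
  have "exp ((2 * real l + 1) * ln 2) = exp (ln 2) ^ (2*l+1)"
    by (subst exp_of_nat_mult[symmetric]) simp
  also have "\<dots> = 2^(2*l+1)" by simp
  finally have e: "exp ((2 * real l + 1) * ln 2) = 2^(2*l+1)" .
  have "exp (- (ln (1/\<delta>) + (2 * real l + 1) * ln 2)) = exp (- ln (1/\<delta>)) / exp ((2 * real l + 1) * ln 2)"
    by (simp add: exp_diff[symmetric])
  also have "exp (- ln (1/\<delta>)) = \<delta>" using assms by (simp add: ln_div)
  finally show ?thesis using e by simp
qed

lemma uniform_dev:
  assumes dens: "is_density f" and n1: "n \<ge> 1" and d: "0 < \<delta>" "\<delta> \<le> 1/2"
    and lnn: "ln (1/\<delta>) \<le> real n"
  shows "\<exists>A \<in> sets (sample_law n f). measure (sample_law n f) A \<ge> 1 - \<delta> \<and>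
     (\<forall>x\<in>A. \<forall>t. \<bar>cnt n {..t} x / real n - cdf (density lborel f) t\<bar> \<le> 60 * sqrt (ln (1/\<delta>) / real n))"
proof -
  define ell where "ell = ln (1/\<delta>)"
  have l2: "ln 2 \<le> ell" unfolding ell_def using d by (intro ln_mono) (auto simp: field_simps)
  have lpos: "0 < ell" using l2 ln_gt_zero[of 2] by linarith
  have npos: "0 < real n" using n1 by simp
  define r where "r = sqrt (ell / real n)"
  have rpos: "0 < r" unfolding r_def using lpos npos by simp
  have r1: "r \<le> 1" unfolding r_def using lnn npos by (simp add: ell_def)
  have r2: "r\<^sup>2 = ell / real n" unfolding r_def using lpos npos by simp
  obtain J where J1: "(1/2) ^ J \<le> r" and J2: "r * 2 ^ J < 2" using choose_J[OF rpos r1] by blast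
  define M where "M = sample_law n f"
  define P where "P = density lborel f"
  interpret M: prob_space M unfolding M_def using sample_prob[OF dens] .
  define L where "L = (\<lambda>l::nat. ell + (2 * real l + 1) * ln 2)"
  define q where "q = (\<lambda>l::nat. real n / 2^l)"
  define lam where "lam = (\<lambda>l. if L l \<le> q l then sqrt (L l / q l) else 1)"
  define sd where "sd = (\<lambda>l. 2 * sqrt (L l * q l) + 2 * L l)"
  define Bad where "Bad = (\<lambda>(l,i). {x\<in>space M. \<bar>cnt n (cell f l i) x - real n / 2^l\<bar> \<ge> sd l})"
  have Lpos: "0 < L l" for l unfolding L_def using lpos by (simp add: add_pos_nonneg)
  have qpos: "0 < q l" for l unfolding q_def using npos by simp
  have cc: "0 < lam l" "lam l \<le> 1" "q l * (lam l)\<^sup>2 - lam l * sd l \<le> - L l" for l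
    using chern_choice[OF Lpos qpos, of l] unfolding lam_def sd_def by auto
  have sd0: "0 \<le> sd l" for l unfolding sd_def using Lpos[of l] qpos[of l] by simp
  have cntm: "(\<lambda>x. cnt n S x) \<in> borel_measurable M" if "S \<in> sets borel" for S
    unfolding cnt_def M_def sample_law_def using that by measurable
  have Bad_sets: "Bad (l,i) \<in> sets M" for l i
    unfolding Bad_def prod.case using cntm[OF cell_borel[OF dens]] by measurable
  have Bad_meas: "measure M (Bad (l,i)) \<le> \<delta> / 2^(2*l)" if "i < 2^l" for l i
  proof -
    have "measure M (Bad (l,i)) \<le> 2 * exp (real n * measure P (cell f l i) * (lam l)\<^sup>2 - lam l * sd l)"
      unfolding Bad_def M_def P_def cnt_def
      using count_tail[OF dens cell_borel[OF dens, of l i] cc(1)[of l] cc(2)[of l], where n=n and t="sd l"] by (simp add: cell_measure[OF dens that])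
    also have "real n * measure P (cell f l i) = q l"
      unfolding P_def q_def using cell_measure[OF dens that] by simp
    also have "2 * exp (q l * (lam l)\<^sup>2 - lam l * sd l) \<le> 2 * exp (- L l)"
      using cc(3)[of l] by simp
    also have "exp (- L l) = \<delta> / 2^(2*l+1)" unfolding L_def ell_def by (rule exp_L[OF d(1)])
    finally show ?thesis by simp
  qed
  define I where "I = Sigma {1..J} (\<lambda>l. {..<(2::nat)^l})"
  have finI: "finite I" unfolding I_def by auto
  define BadU where "BadU = (\<Union>p\<in>I. Bad p)"
  have BadU_sets: "BadU \<in> sets M" unfolding BadU_def using finI Bad_sets by auto
  have BadU_meas: "measure M BadU \<le> \<delta>"
  proof -
    have "measure M BadU \<le> (\<Sum>p\<in>I. measure M (Bad p))"
      unfolding BadU_def by (rule M.finite_measure_subadditive_finite[OF finI]) (use Bad_sets in auto)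
    also have "\<dots> = (\<Sum>l\<in>{1..J}. \<Sum>i<(2::nat)^l. measure M (Bad (l,i)))"
      unfolding I_def by (subst sum.Sigma) auto
    also have "\<dots> \<le> (\<Sum>l\<in>{1..J}. \<Sum>i<(2::nat)^l. \<delta> / 2^(2*l))"
      by (intro sum_mono Bad_meas) auto
    also have "\<dots> = (\<Sum>l\<in>{1..J}. \<delta> * (1/2)^l)"
    proof (rule sum.cong)
      fix l :: nat
      have "(\<Sum>i<(2::nat)^l. \<delta> / 2^(2*l)) = 2^l * (\<delta> / 2^(2*l))" by simp
      also have "\<dots> = \<delta> * (1/2)^l" by (simp add: power_mult power2_eq_square field_simps power_divide)
      finally show "(\<Sum>i<(2::nat)^l. \<delta> / 2^(2*l)) = \<delta> * (1/2)^l" .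
    qed simp
    also have "\<dots> = \<delta> * (1 - (1/2)^J)" using geom_half[of J] by (simp add: sum_distrib_left[symmetric])
    also have "\<dots> \<le> \<delta>" using d by (simp add: mult_left_le)
    finally show ?thesis .
  qed
  define A where "A = space M - BadU"
  have A_sets: "A \<in> sets M" unfolding A_def using BadU_sets by auto
  have A_meas: "measure M A \<ge> 1 - \<delta>"
    unfolding A_def using M.prob_compl[OF BadU_sets] BadU_meas by simp
  define D where "D = (\<Sum>l\<in>{1..J}. sd l)"
  have Dbound: "D / real n \<le> 36 * r + 2 * r\<^sup>2 * (real J + 2)\<^sup>2"
  proof -
    have Lle: "L l \<le> (2 * real l + 2) * ell" for l
    proof -
      have "(2 * real l + 1) * ln 2 \<le> (2 * real l + 1) * ell" using l2 by (intro mult_left_mono) auto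
      thus ?thesis unfolding L_def by (simp add: algebra_simps)
    qed
    have sq: "sqrt (L l * q l) \<le> sqrt (ell * real n) * (2 * (9/10)^l)" if "l \<ge> 1" for l
    proof -
      have "L l * q l \<le> ((2 * real l + 2) * ell) * q l" using Lle qpos[of l] by (intro mult_right_mono) auto
      also have "\<dots> = (ell * real n) * ((2 * real l + 2) / 2^l)" by (simp add: q_def)
      finally have "sqrt (L l * q l) \<le> sqrt (ell * real n) * sqrt ((2 * real l + 2) / 2^l)"
        by (metis real_sqrt_le_mono real_sqrt_mult)
      also have "\<dots> \<le> sqrt (ell * real n) * (2 * (9/10)^l)"
        using arith_sqrt_term[OF that] lpos npos by (intro mult_left_mono) auto
      finally show ?thesis .
    qed
    have "D \<le> (\<Sum>l\<in>{1..J}. 4 * sqrt (ell * real n) * (9/10)^l + 2 * ell * (2 * real l + 2))"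
      unfolding D_def sd_def
    proof (rule sum_mono)
      fix l assume "l \<in> {1..J}"
      hence "l \<ge> 1" by simp
      thus "2 * sqrt (L l * q l) + 2 * L l \<le> 4 * sqrt (ell * real n) * (9/10)^l + 2 * ell * (2 * real l + 2)"
        using sq[of l] Lle[of l] by (simp add: algebra_simps)
    qed
    also have "\<dots> = (\<Sum>l\<in>{1..J}. 4 * sqrt (ell * real n) * (9/10)^l) + (\<Sum>l\<in>{1..J}. 2 * ell * (2 * real l + 2))"
      by (rule sum.distrib)
    also have "\<dots> = 4 * sqrt (ell * real n) * (\<Sum>l\<in>{1..J}. (9/10)^l) + 2 * ell * (\<Sum>l\<in>{1..J}. 2 * real l + 2)"
      by (simp only: sum_distrib_left)
    also have "\<dots> \<le> 4 * sqrt (ell * real n) * 9 + 2 * ell * (real J + 2)\<^sup>2"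
      using geom_09_le[of J] sum_lin[of J] lpos
      by (intro add_mono mult_left_mono) auto
    finally have D1: "D \<le> 36 * sqrt (ell * real n) + 2 * ell * (real J + 2)\<^sup>2" by simp
    have e1: "sqrt (ell * real n) / real n = r"
    proof -
      have "ell / real n = (ell * real n) / (real n)\<^sup>2" using npos by (simp add: power2_eq_square)
      hence "r = sqrt (ell * real n) / sqrt ((real n)\<^sup>2)" unfolding r_def by (simp only: real_sqrt_divide)
      thus ?thesis by simp
    qed
    have "D / real n \<le> (36 * sqrt (ell * real n) + 2 * ell * (real J + 2)\<^sup>2) / real n"
      using D1 npos by (intro divide_right_mono) auto
    also have "\<dots> = 36 * (sqrt (ell * real n) / real n) + 2 * (ell / real n) * (real J + 2)\<^sup>2"
      by (simp add: add_divide_distrib)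
    also have "\<dots> = 36 * r + 2 * r\<^sup>2 * (real J + 2)\<^sup>2" using e1 r2 by simp
    finally show ?thesis .
  qed
  have final: "1 / 2^J + D / real n \<le> 60 * r"
  proof -
    have a: "1 / 2^J \<le> r" using J1 by (simp add: power_divide)
    have "r\<^sup>2 * (real J + 2)\<^sup>2 \<le> r\<^sup>2 * (5 * 2^J)" using sq_le_pow[of J] by (intro mult_left_mono) auto
    also have "\<dots> = 5 * r * (r * 2^J)" by (simp add: power2_eq_square)
    also have "\<dots> \<le> 5 * r * 2" using J2 rpos by (intro mult_left_mono) auto
    finally have b: "r\<^sup>2 * (real J + 2)\<^sup>2 \<le> 10 * r" by simp
    show ?thesis using a b Dbound rpos by simp
  qed
  show ?thesis
  proof (intro bexI[of _ A] conjI ballI allI)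
    show "A \<in> sets (sample_law n f)" using A_sets by (simp add: M_def)
    show "1 - \<delta> \<le> measure (sample_law n f) A" using A_meas by (simp add: M_def)
    fix x t assume xA: "x \<in> A"
    have good: "\<bar>cnt n (cell f l i) x - real n / 2^l\<bar> \<le> sd l" if "l \<in> {1..J}" "i < 2^l" for l i
    proof -
      have "(l,i) \<in> I" using that by (simp add: I_def)
      hence "x \<notin> Bad (l,i)" using xA by (auto simp: A_def BadU_def)
      thus ?thesis using xA by (auto simp: Bad_def A_def)
    qed
    have ch: "\<bar>cnt n (Tset f (real m / 2^J)) x - real n * real m / 2^J\<bar> \<le> D" if "1 \<le> m" "m \<le> 2^J" for m
      unfolding D_def by (rule chain[OF dens good sd0 order_refl that]) auto
    have D0: "0 \<le> D" unfolding D_def using sd0 by (simp add: sum_nonneg)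
    have gt: "\<bar>cnt n {..t} x - real n * cdf (density lborel f) t\<bar> \<le> real n / 2^J + D"
      by (rule grid_to_all[OF dens ch D0])
    have "\<bar>cnt n {..t} x / real n - cdf (density lborel f) t\<bar> = \<bar>cnt n {..t} x - real n * cdf (density lborel f) t\<bar> / real n"
      using npos by (simp add: field_simps)
    also have "\<dots> \<le> (real n / 2^J + D) / real n" using gt npos by (intro divide_right_mono) auto
    also have "\<dots> = 1 / 2^J + D / real n" using npos by (simp add: field_simps)
    also have "\<dots> \<le> 60 * r" by (rule final)
    finally show "\<bar>cnt n {..t} x / real n - cdf (density lborel f) t\<bar> \<le> 60 * sqrt (ln (1/\<delta>) / real n)"
      by (simp add: r_def ell_def)
  qed
qed

lemma ln2_ge_half: "1/2 \<le> ln (2::real)"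
proof -
  have "exp (1/2::real) \<le> 1 + 1/2 + (1/2)\<^sup>2" by (rule exp_bound) auto
  also have "\<dots> \<le> 2" by (simp add: power2_eq_square)
  finally have "exp (1/2::real) \<le> 2" .
  hence "ln (exp (1/2::real)) \<le> ln 2" by (subst ln_le_cancel_iff) auto
  thus ?thesis by simp
qed

lemma gm_density:
  assumes s: "0 < \<sigma>" and w: "\<forall>i<k. 0 \<le> w i" "(\<Sum>i<k. w i) = 1"
  shows "is_density (gauss_mix k w \<mu> \<sigma>)"
proof -
  have gm: "gauss_mix k w \<mu> \<sigma> = (\<lambda>x. \<Sum>i<k. w i * normal_density (\<mu> i) \<sigma> x)"
    by (simp add: gauss_mix_def[abs_def])
  have int: "integrable lborel (\<lambda>x. \<Sum>i<k. w i * normal_density (\<mu> i) \<sigma> x)"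
    by (auto intro!: integrable_sum integrable_mult_right integrable_normal_density s)
  have "(\<integral>x. (\<Sum>i<k. w i * normal_density (\<mu> i) \<sigma> x) \<partial>lborel) = (\<Sum>i<k. w i * (\<integral>x. normal_density (\<mu> i) \<sigma> x \<partial>lborel))"
    using s by (subst Bochner_Integration.integral_sum) auto
  also have "\<dots> = 1" using s w by simp
  finally have one: "(\<integral>x. (\<Sum>i<k. w i * normal_density (\<mu> i) \<sigma> x) \<partial>lborel) = 1" .
  show ?thesis unfolding is_density_def gm
    using int one w by (auto intro!: sum_nonneg)
qed

lemma gm_cont: assumes s: "0 < \<sigma>" shows "isCont (gauss_mix k w \<mu> \<sigma>) x"
proof -
  have gm: "gauss_mix k w \<mu> \<sigma> = (\<lambda>x. \<Sum>i<k. w i * (1 / sqrt (2 * pi * \<sigma>\<^sup>2) * exp (-(x - \<mu> i)\<^sup>2/ (2 * \<sigma>\<^sup>2))))"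
    by (simp add: gauss_mix_def[abs_def] normal_density_def[abs_def])
  show ?thesis unfolding gm using s by (intro continuous_intros) auto
qed

lemma cdf_dens:
  assumes d: "is_density g"
  shows "cdf (density lborel g) t = (LINT x:{..t}|lborel. g x)"
proof -
  have m: "g \<in> borel_measurable lborel" and nn: "\<And>x. 0 \<le> g x" and i: "integrable lborel g"
    using d by (auto simp: is_density_def)
  have ii: "integrable lborel (\<lambda>x. indicator {..t} x * g x)"
    using integrable_mult_indicator[of "{..t}" lborel g] i by simp
  have "emeasure (density lborel g) {..t} = (\<integral>\<^sup>+x. ennreal (g x) * indicator {..t} x \<partial>lborel)"
    using m by (simp add: emeasure_density)
  also have "\<dots> = (\<integral>\<^sup>+x. ennreal (indicator {..t} x * g x) \<partial>lborel)"
    by (intro nn_integral_cong) (auto split: split_indicator)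
  also have "\<dots> = ennreal (\<integral>x. indicator {..t} x * g x \<partial>lborel)"
    using ii nn by (intro nn_integral_eq_integral) (auto split: split_indicator)
  finally have e: "emeasure (density lborel g) {..t} = ennreal (\<integral>x. indicator {..t} x * g x \<partial>lborel)" .
  have nn2: "0 \<le> (\<integral>x. indicator {..t} x * g x \<partial>lborel)"
    using nn by (intro Bochner_Integration.integral_nonneg) (auto split: split_indicator)
  show ?thesis unfolding cdf_def measure_def e set_lebesgue_integral_def using nn2 by simp
qed

lemma set_int_abs_le:
  fixes h :: "real \<Rightarrow> real"
  assumes i: "integrable lborel h" and S: "S \<in> sets borel"
  shows "\<bar>LINT x:S|lborel. h x\<bar> \<le> (\<integral>x. \<bar>h x\<bar> \<partial>lborel)"
proof -
  have "\<bar>LINT x:S|lborel. h x\<bar> = \<bar>\<integral>x. indicator S x * h x \<partial>lborel\<bar>"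
    by (simp add: set_lebesgue_integral_def)
  also have "\<dots> \<le> (\<integral>x. \<bar>indicator S x * h x\<bar> \<partial>lborel)"
    by (rule integral_abs_bound)
  also have "\<dots> \<le> (\<integral>x. \<bar>h x\<bar> \<partial>lborel)"
  proof (rule integral_mono)
    show "integrable lborel (\<lambda>x. \<bar>indicator S x * h x\<bar>)"
      by (intro integrable_abs) (use integrable_mult_indicator[of S lborel h] S i in simp)
  qed (use i in \<open>auto split: split_indicator\<close>)
  finally show ?thesis .
qed

lemma tv_le_one:
  assumes a: "is_density a" and b: "is_density b"
  shows "tv a b \<le> 1"
proof -
  have ia: "integrable lborel a" and ib: "integrable lborel b" and a0: "\<And>x. 0 \<le> a x" and b0: "\<And>x. 0 \<le> b x"
    and a1: "(\<integral>x. a x \<partial>lborel) = 1" and b1: "(\<integral>x. b x \<partial>lborel) = 1"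
    using a b by (auto simp: is_density_def)
  have ab: "\<bar>a x - b x\<bar> \<le> a x + b x" for x using a0[of x] b0[of x] by linarith
  have "(\<integral>x. \<bar>a x - b x\<bar> \<partial>lborel) \<le> (\<integral>x. a x + b x \<partial>lborel)"
    by (rule integral_mono) (use ia ib ab in auto)
  also have "\<dots> = 2" using ia ib a1 b1 by simp
  finally show ?thesis unfolding tv_def by simp
qed

lemma tv_tri:
  assumes ia: "integrable lborel a" and ib: "integrable lborel b" and ic: "integrable lborel c"
  shows "tv a c \<le> tv a b + tv b c"
proof -
  have "(\<integral>x. \<bar>a x - c x\<bar> \<partial>lborel) \<le> (\<integral>x. \<bar>a x - b x\<bar> + \<bar>b x - c x\<bar> \<partial>lborel)"
    by (rule integral_mono) (use ia ib ic in auto)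
  also have "\<dots> = (\<integral>x. \<bar>a x - b x\<bar> \<partial>lborel) + (\<integral>x. \<bar>b x - c x\<bar> \<partial>lborel)"
    using ia ib ic by (intro Bochner_Integration.integral_add) auto
  finally show ?thesis unfolding tv_def by simp
qed

lemma cdf_diff_set_int:
  assumes a: "is_density a" and b: "is_density b"
  shows "cdf (density lborel a) t - cdf (density lborel b) t = (LINT x:{..t}|lborel. a x - b x)"
proof -
  have ia: "integrable lborel a" and ib: "integrable lborel b" using a b by (auto simp: is_density_def)
  show ?thesis unfolding cdf_dens[OF a] cdf_dens[OF b]
    by (rule set_integral_diff(2)[symmetric]) (use set_integrable_of_integrable ia ib in auto)
qed

lemma cdf_diff_tv:
  assumes a: "is_density a" and b: "is_density b"
  shows "\<bar>cdf (density lborel a) t - cdf (density lborel b) t\<bar> \<le> 2 * tv a b"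
proof -
  have ia: "integrable lborel a" and ib: "integrable lborel b" using a b by (auto simp: is_density_def)
  have "\<bar>LINT x:{..t}|lborel. a x - b x\<bar> \<le> (\<integral>x. \<bar>a x - b x\<bar> \<partial>lborel)"
    by (rule set_int_abs_le) (use ia ib in auto)
  thus ?thesis unfolding cdf_diff_set_int[OF a b] tv_def by simp
qed

lemma tv_mix_bound:
  assumes s: "0 < \<sigma>"
    and w1: "\<forall>i<k. 0 \<le> w1 i" "(\<Sum>i<k. w1 i) = 1"
    and w2: "\<forall>i<k. 0 \<le> w2 i" "(\<Sum>i<k. w2 i) = 1"
    and Mb: "\<And>t. \<bar>cdf (density lborel (gauss_mix k w1 \<mu>1 \<sigma>)) t - cdf (density lborel (gauss_mix k w2 \<mu>2 \<sigma>)) t\<bar> \<le> Mb"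
  shows "tv (gauss_mix k w1 \<mu>1 \<sigma>) (gauss_mix k w2 \<mu>2 \<sigma>) \<le> 2 * real k * Mb"
proof -
  define g1 where "g1 = gauss_mix k w1 \<mu>1 \<sigma>"
  define g2 where "g2 = gauss_mix k w2 \<mu>2 \<sigma>"
  have d1: "is_density g1" unfolding g1_def using gm_density[OF s w1] .
  have d2: "is_density g2" unfolding g2_def using gm_density[OF s w2] .
  have i1: "integrable lborel g1" and i2: "integrable lborel g2"
    and one1: "(\<integral>x. g1 x \<partial>lborel) = 1" and one2: "(\<integral>x. g2 x \<partial>lborel) = 1"
    using d1 d2 by (auto simp: is_density_def)
  have M0: "0 \<le> Mb" using Mb[of 0] by linarith
  from gauss_mix_diff_zeros[OF s, of k w1 \<mu>1 w2 \<mu>2]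
  show ?thesis
  proof
    assume "\<forall>x. gauss_mix k w1 \<mu>1 \<sigma> x = gauss_mix k w2 \<mu>2 \<sigma> x"
    hence "tv (gauss_mix k w1 \<mu>1 \<sigma>) (gauss_mix k w2 \<mu>2 \<sigma>) = 0" by (simp add: tv_def)
    thus ?thesis using M0 by simp
  next
    assume Z: "finite {x. gauss_mix k w1 \<mu>1 \<sigma> x = gauss_mix k w2 \<mu>2 \<sigma> x} \<and>
       card {x. gauss_mix k w1 \<mu>1 \<sigma> x = gauss_mix k w2 \<mu>2 \<sigma> x} < 2 * k"
    define h where "h = (\<lambda>x. g1 x - g2 x)"
    have hz: "{x. h x = 0} = {x. gauss_mix k w1 \<mu>1 \<sigma> x = gauss_mix k w2 \<mu>2 \<sigma> x}"
      by (auto simp: h_def g1_def g2_def)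
    have "(\<integral>x. \<bar>h x\<bar> \<partial>lborel) \<le> (2 * real (card {x. h x = 0}) + 2) * Mb"
    proof (rule tv_pieces)
      show "\<And>x. isCont h x" unfolding h_def g1_def g2_def using gm_cont[OF s] by (intro continuous_intros) auto
      show "integrable lborel h" unfolding h_def using i1 i2 by auto
      show "(\<integral>x. h x \<partial>lborel) = 0" unfolding h_def using i1 i2 one1 one2 by simp
      show "finite {x. h x = 0}" using Z hz by simp
      show "\<bar>LINT x:{..t}|lborel. h x\<bar> \<le> Mb" for t
        using Mb[of t] cdf_diff_set_int[OF d1 d2, of t] unfolding h_def g1_def g2_def by simp
    qed
    also have "\<dots> \<le> (4 * real k) * Mb"
    proof -
      have "card {x. h x = 0} + 1 \<le> 2 * k" using Z hz by simp
      hence "real (card {x. h x = 0} + 1) \<le> real (2 * k)" by (simp only: of_nat_le_iff)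
      hence "2 * real (card {x. h x = 0}) + 2 \<le> 4 * real k" by simp
      thus ?thesis using M0 by (intro mult_right_mono) auto
    qed
    finally show ?thesis unfolding tv_def h_def g1_def g2_def by simp
  qed
qed

theorem theorem4:
  fixes k :: nat
  assumes "k \<ge> 1"
  shows "\<exists>C N. 0 < C \<and>
    (\<forall>n \<ge> N. \<forall>\<epsilon> \<delta> \<sigma> :: real. 0 < \<epsilon> \<and> \<epsilon> \<le> 1/2 \<and> 0 < \<delta> \<and> \<delta> \<le> 1/2 \<and> 0 < \<sigma> \<longrightarrow>
      (\<exists>est :: (nat \<Rightarrow> real) \<Rightarrow> real \<Rightarrow> real.
         (\<forall>X. is_density (est X)) \<and>
         (\<forall>f w \<mu>. is_density f \<and> subgaussian 1 f \<and>
            (\<forall>i<k. 0 \<le> w i) \<and> (\<Sum>i<k. w i) = 1 \<and>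
            tv f (gauss_mix k w \<mu> \<sigma>) \<le> \<epsilon> \<longrightarrow>
            (\<exists>A \<in> sets (sample_law n f).
               measure (sample_law n f) A \<ge> 1 - \<delta> \<and>
               (\<forall>X\<in>A. tv (est X) f \<le>
                  C * (\<epsilon> * sqrt (ln (1/\<epsilon>)) + sqrt (ln (1/\<delta>) / real n)))))))"
proof -
  define C where "C = 300 * real k"
  have k1: "1 \<le> real k" using assms by simp
  show ?thesis
  proof (intro exI[of _ C] exI[of _ "1::nat"] conjI allI impI)
    show "0 < C" using k1 by (simp add: C_def)
    fix n :: nat and \<epsilon> \<delta> \<sigma> :: real
    assume n1: "1 \<le> n"
    assume pars: "0 < \<epsilon> \<and> \<epsilon> \<le> 1/2 \<and> 0 < \<delta> \<and> \<delta> \<le> 1/2 \<and> 0 < \<sigma>"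
    hence e0: "0 < \<epsilon>" and e1: "\<epsilon> \<le> 1/2" and d0: "0 < \<delta>" and d1: "\<delta> \<le> 1/2" and s0: "0 < \<sigma>" by auto
    have npos: "0 < real n" using n1 by simp
    define cls where "cls = {g. \<exists>w \<mu>. (\<forall>i<k. 0 \<le> w i) \<and> (\<Sum>i<k. w i) = 1 \<and> g = gauss_mix k w \<mu> \<sigma>}"
    define \<Phi> where "\<Phi> = (\<lambda>X g. (SUP t. \<bar>cnt n {..t} X / real n - cdf (density lborel g) t\<bar>))"
    define est where "est = (\<lambda>X. SOME g. g \<in> cls \<and> \<Phi> X g \<le> (INF h\<in>cls. \<Phi> X h) + 1 / real n)"
    have cls_dens: "is_density g" if "g \<in> cls" for g
      using that gm_density[OF s0] by (auto simp: cls_def)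
    have emp: "0 \<le> cnt n {..t} X / real n" "cnt n {..t} X / real n \<le> 1" for t X
    proof -
      show "0 \<le> cnt n {..t} X / real n" using cnt_nonneg by simp
      have "cnt n {..t} X \<le> cnt n UNIV X" by (rule cnt_mono) simp
      thus "cnt n {..t} X / real n \<le> 1" using npos by (simp add: cnt_UNIV)
    qed
    have cdfb: "0 \<le> cdf (density lborel g) t" "cdf (density lborel g) t \<le> 1" if "is_density g" for g t
    proof -
      interpret real_distribution "density lborel g" using dens_real_dist[OF that] .
      show "0 \<le> cdf (density lborel g) t" by (rule cdf_nonneg)
      show "cdf (density lborel g) t \<le> 1" by (rule cdf_bounded_prob)
    qed
    have absb: "\<bar>cnt n {..t} X / real n - cdf (density lborel g) t\<bar> \<le> 2" if "g \<in> cls" for g t X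
      using emp[of t X] cdfb[OF cls_dens[OF that], of t] by linarith
    have bdd: "bdd_above (range (\<lambda>t. \<bar>cnt n {..t} X / real n - cdf (density lborel g) t\<bar>))" if "g \<in> cls" for g X
      using absb[OF that] by (intro bdd_aboveI[of _ 2]) auto
    have Phi_up: "\<bar>cnt n {..t} X / real n - cdf (density lborel g) t\<bar> \<le> \<Phi> X g" if "g \<in> cls" for g t X
      unfolding \<Phi>_def by (rule cSUP_upper[OF _ bdd[OF that]]) simp
    have Phi_least: "\<Phi> X g \<le> B" if "g \<in> cls" "\<And>t. \<bar>cnt n {..t} X / real n - cdf (density lborel g) t\<bar> \<le> B" for g X B
      unfolding \<Phi>_def by (rule cSUP_least) (use that in auto)
    have Phi0: "0 \<le> \<Phi> X g" if "g \<in> cls" for g X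
      using Phi_up[OF that, of 0 X] by linarith
    have cls_ne: "gauss_mix k (\<lambda>i. if i = 0 then 1 else 0) (\<lambda>_. 0) \<sigma> \<in> cls"
      unfolding cls_def using assms by (intro CollectI exI[of _ "\<lambda>i. if i = 0 then 1 else 0"] exI[of _ "\<lambda>_. 0"]) auto
    have bddb: "bdd_below (\<Phi> X ` cls)" for X
      using Phi0 by (intro bdd_belowI[of _ 0]) auto
    have est_spec: "est X \<in> cls \<and> \<Phi> X (est X) \<le> (INF h\<in>cls. \<Phi> X h) + 1 / real n" for X
    proof -
      have ne: "\<Phi> X ` cls \<noteq> {}" using cls_ne by blast
      have "Inf (\<Phi> X ` cls) < (INF h\<in>cls. \<Phi> X h) + 1 / real n" using npos by simp
      then obtain y where "y \<in> \<Phi> X ` cls" "y < (INF h\<in>cls. \<Phi> X h) + 1 / real n"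
        using cInf_lessD[OF ne] by blast
      then obtain g where "g \<in> cls" "\<Phi> X g \<le> (INF h\<in>cls. \<Phi> X h) + 1 / real n" by force
      hence "\<exists>g. g \<in> cls \<and> \<Phi> X g \<le> (INF h\<in>cls. \<Phi> X h) + 1 / real n" by blast
      thus ?thesis unfolding est_def by (rule someI_ex)
    qed
    show "\<exists>est :: (nat \<Rightarrow> real) \<Rightarrow> real \<Rightarrow> real.
         (\<forall>X. is_density (est X)) \<and>
         (\<forall>f w \<mu>. is_density f \<and> subgaussian 1 f \<and>
            (\<forall>i<k. 0 \<le> w i) \<and> (\<Sum>i<k. w i) = 1 \<and>
            tv f (gauss_mix k w \<mu> \<sigma>) \<le> \<epsilon> \<longrightarrow>
            (\<exists>A \<in> sets (sample_law n f).
               measure (sample_law n f) A \<ge> 1 - \<delta> \<and>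
               (\<forall>X\<in>A. tv (est X) f \<le>
                  C * (\<epsilon> * sqrt (ln (1/\<epsilon>)) + sqrt (ln (1/\<delta>) / real n)))))"
    proof (intro exI[of _ est] conjI allI impI)
      show "is_density (est X)" for X using est_spec[of X] cls_dens by blast
      fix f w \<mu>
      assume H: "is_density f \<and> subgaussian 1 f \<and> (\<forall>i<k. 0 \<le> w i) \<and> (\<Sum>i<k. w i) = 1 \<and>
            tv f (gauss_mix k w \<mu> \<sigma>) \<le> \<epsilon>"
      hence df: "is_density f" and w0: "\<forall>i<k. 0 \<le> w i" and w1: "(\<Sum>i<k. w i) = 1"
        and tvf: "tv f (gauss_mix k w \<mu> \<sigma>) \<le> \<epsilon>" by auto
      define gs where "gs = gauss_mix k w \<mu> \<sigma>"
      have gs_cls: "gs \<in> cls" unfolding cls_def gs_def using w0 w1 by blast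
      have dgs: "is_density gs" by (rule cls_dens[OF gs_cls])
      define ell where "ell = ln (1/\<delta>)"
      define e' where "e' = \<epsilon> * sqrt (ln (1/\<epsilon>))"
      have lne: "1/2 \<le> ln (1/\<epsilon>)"
      proof -
        have "ln 2 \<le> ln (1/\<epsilon>)" using e0 e1 by (intro ln_mono) (auto simp: field_simps)
        thus ?thesis using ln2_ge_half by linarith
      qed
      have "0 \<le> ln (1/\<epsilon>)" using lne by linarith
      hence e'0: "0 \<le> e'" unfolding e'_def using e0 by (intro mult_nonneg_nonneg real_sqrt_ge_zero) auto
      have e'e: "\<epsilon> \<le> 2 * e'"
      proof -
        have "1/2 \<le> sqrt (ln (1/\<epsilon>))"
        proof -
          have "sqrt (1/4) \<le> sqrt (ln (1/\<epsilon>))" using lne by (intro real_sqrt_le_mono) simp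
          moreover have "sqrt (1/4::real) = 1/2" by (simp add: real_sqrt_divide)
          ultimately show ?thesis by simp
        qed
        hence "\<epsilon> * (1/2) \<le> \<epsilon> * sqrt (ln (1/\<epsilon>))" using e0 by (intro mult_left_mono) auto
        thus ?thesis unfolding e'_def by simp
      qed
      have ell2: "1/2 \<le> ell"
      proof -
        have "ln 2 \<le> ell" unfolding ell_def using d0 d1 by (intro ln_mono) (auto simp: field_simps)
        thus ?thesis using ln2_ge_half by linarith
      qed
      interpret M: prob_space "sample_law n f" using sample_prob[OF df] .
      show "\<exists>A \<in> sets (sample_law n f).
               measure (sample_law n f) A \<ge> 1 - \<delta> \<and>
               (\<forall>X\<in>A. tv (est X) f \<le>
                  C * (\<epsilon> * sqrt (ln (1/\<epsilon>)) + sqrt (ln (1/\<delta>) / real n)))"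
      proof (cases "ell \<le> real n")
        case False
        show ?thesis
        proof (intro bexI[of _ "space (sample_law n f)"] conjI ballI)
          show "space (sample_law n f) \<in> sets (sample_law n f)" by simp
          show "1 - \<delta> \<le> measure (sample_law n f) (space (sample_law n f))" using d0 by (simp add: M.prob_space)
          fix X
          have "tv (est X) f \<le> 1" using tv_le_one[OF cls_dens df] est_spec[of X] by blast
          also have "1 \<le> sqrt (ln (1/\<delta>) / real n)"
            using False npos by (simp add: ell_def)
          also have "\<dots> \<le> C * (e' + sqrt (ln (1/\<delta>) / real n))"
          proof -
            have "sqrt (ln (1/\<delta>) / real n) \<le> e' + sqrt (ln (1/\<delta>) / real n)" using e'0 by simp
            also have "\<dots> \<le> C * (e' + sqrt (ln (1/\<delta>) / real n))"
            proof -
              have C1: "1 \<le> C" using k1 by (simp add: C_def)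
              have "0 \<le> sqrt (ln (1/\<delta>) / real n)" using ell2 npos by (simp add: ell_def)
              hence "0 \<le> e' + sqrt (ln (1/\<delta>) / real n)" using e'0 by linarith
              from mult_right_mono[OF C1 this] show ?thesis by simp
            qed
            finally show ?thesis .
          qed
          finally show "tv (est X) f \<le> C * (\<epsilon> * sqrt (ln (1/\<epsilon>)) + sqrt (ln (1/\<delta>) / real n))"
            by (simp add: e'_def)
        qed
      next
        case True
        obtain A where A: "A \<in> sets (sample_law n f)" "measure (sample_law n f) A \<ge> 1 - \<delta>"
          and dev: "\<And>X t. X \<in> A \<Longrightarrow> \<bar>cnt n {..t} X / real n - cdf (density lborel f) t\<bar> \<le> 60 * sqrt (ln (1/\<delta>) / real n)"
          using uniform_dev[OF df n1 d0 d1] True by (auto simp: ell_def)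
        define r where "r = sqrt (ln (1/\<delta>) / real n)"
        have r0: "0 \<le> r" unfolding r_def using ell2 npos by (simp add: ell_def)
        have nr: "1 / real n \<le> 2 * r"
        proof -
          have "(1 / real n)\<^sup>2 \<le> (2 * r)\<^sup>2"
          proof -
            have "(1 / real n)\<^sup>2 = (1 / real n) * (1 / real n)" by (simp only: power2_eq_square)
            also have "\<dots> \<le> 1 / real n" using npos n1 by (intro mult_left_le) auto
            also have "\<dots> \<le> (4 * ell) / real n" using ell2 npos by (intro divide_right_mono) auto
            also have "\<dots> = 4 * r\<^sup>2"
            proof -
              have "r\<^sup>2 = ell / real n" unfolding r_def ell_def
                by (rule real_sqrt_pow2) (use ell2 npos in \<open>simp add: ell_def\<close>)
              thus ?thesis by simp
            qed
            also have "\<dots> = (2 * r)\<^sup>2" by (simp add: power_mult_distrib)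
            finally show ?thesis .
          qed
          thus ?thesis by (rule power2_le_imp_le) (use r0 in auto)
        qed
        show ?thesis
        proof (intro bexI[of _ A] conjI ballI)
          show "A \<in> sets (sample_law n f)" by (rule A(1))
          show "1 - \<delta> \<le> measure (sample_law n f) A" by (rule A(2))
          fix X assume XA: "X \<in> A"
          define E where "E = (\<lambda>t. cnt n {..t} X / real n)"
          have Phis: "\<Phi> X gs \<le> 60 * r + 2 * \<epsilon>"
          proof (rule Phi_least[OF gs_cls])
            fix t
            have "\<bar>cnt n {..t} X / real n - cdf (density lborel gs) t\<bar> \<le>
                \<bar>cnt n {..t} X / real n - cdf (density lborel f) t\<bar> + \<bar>cdf (density lborel f) t - cdf (density lborel gs) t\<bar>"
              by linarith
            also have "\<dots> \<le> 60 * r + 2 * tv f gs"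
              using dev[OF XA, of t] cdf_diff_tv[OF df dgs, of t] by (simp add: r_def)
            also have "\<dots> \<le> 60 * r + 2 * \<epsilon>" using tvf by (simp add: gs_def)
            finally show "\<bar>cnt n {..t} X / real n - cdf (density lborel gs) t\<bar> \<le> 60 * r + 2 * \<epsilon>" .
          qed
          have ec: "est X \<in> cls" and eb: "\<Phi> X (est X) \<le> (INF h\<in>cls. \<Phi> X h) + 1 / real n"
            using est_spec[of X] by auto
          have "(INF h\<in>cls. \<Phi> X h) \<le> \<Phi> X gs" by (rule cINF_lower[OF bddb gs_cls])
          hence Phie: "\<Phi> X (est X) \<le> \<Phi> X gs + 1 / real n" using eb by simp
          obtain w' \<mu>' where w': "\<forall>i<k. 0 \<le> w' i" "(\<Sum>i<k. w' i) = 1" and eX: "est X = gauss_mix k w' \<mu>' \<sigma>"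
            using ec unfolding cls_def by blast
          have cd: "\<bar>cdf (density lborel (gauss_mix k w' \<mu>' \<sigma>)) t - cdf (density lborel (gauss_mix k w \<mu> \<sigma>)) t\<bar>
              \<le> 2 * (60 * r + 2 * \<epsilon>) + 1 / real n" for t
          proof -
            have "\<bar>cdf (density lborel (est X)) t - cdf (density lborel gs) t\<bar> \<le>
                \<bar>cnt n {..t} X / real n - cdf (density lborel (est X)) t\<bar> + \<bar>cnt n {..t} X / real n - cdf (density lborel gs) t\<bar>"
              by linarith
            also have "\<dots> \<le> \<Phi> X (est X) + \<Phi> X gs" using Phi_up[OF ec] Phi_up[OF gs_cls] by (intro add_mono)
            also have "\<dots> \<le> 2 * (60 * r + 2 * \<epsilon>) + 1 / real n" using Phie Phis by simp
            finally show ?thesis by (simp add: eX gs_def)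
          qed
          have tv1: "tv (est X) gs \<le> 2 * real k * (2 * (60 * r + 2 * \<epsilon>) + 1 / real n)"
            unfolding eX gs_def by (rule tv_mix_bound[OF s0 w' w0 w1 cd])
          have ie: "integrable lborel (est X)" using cls_dens[OF ec] by (simp add: is_density_def)
          have igs: "integrable lborel gs" using dgs by (simp add: is_density_def)
          have iff: "integrable lborel f" using df by (simp add: is_density_def)
          have tvsym: "tv gs f = tv f gs" unfolding tv_def by (simp add: abs_minus_commute)
          have "tv (est X) f \<le> tv (est X) gs + tv gs f" by (rule tv_tri[OF ie igs iff])
          also have "\<dots> \<le> 2 * real k * (2 * (60 * r + 2 * \<epsilon>) + 1 / real n) + \<epsilon>"
            using tv1 tvsym tvf by (simp add: gs_def)
          also have "\<dots> \<le> 2 * real k * (2 * (60 * r + 2 * \<epsilon>) + 2 * r) + \<epsilon>"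
            using nr k1 by (intro add_mono mult_left_mono) auto
          also have "\<dots> = 244 * real k * r + (8 * real k + 1) * \<epsilon>" by (simp add: algebra_simps)
          also have "\<dots> \<le> 244 * real k * r + (8 * real k + 1) * (2 * e')"
            using e'e k1 by (intro add_mono mult_left_mono) auto
          also have "\<dots> \<le> C * (e' + r)"
          proof -
            have "244 * real k * r \<le> 300 * real k * r" using r0 k1 by (intro mult_right_mono) auto
            moreover have "(8 * real k + 1) * (2 * e') \<le> 300 * real k * e'"
            proof -
              have "(8 * real k + 1) * 2 \<le> 300 * real k" using k1 by simp
              from mult_right_mono[OF this e'0] show ?thesis by (simp add: algebra_simps)
            qed
            ultimately show ?thesis by (simp add: C_def algebra_simps)
          qed
          finally show "tv (est X) f \<le> C * (\<epsilon> * sqrt (ln (1/\<epsilon>)) + sqrt (ln (1/\<delta>) / real n))"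
            by (simp add: e'_def r_def)
        qed
      qed
    qed
  qed
qed

end
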